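(* Let $K\ge 2$, let $\boldsymbol{\pi}\in(0,1)^K$ with $\sum_k\pi_k=1$, and let $\mathbf{B}\in(0,1)^{K\times K}$ be symmetric with pairwise distinct rows. Let $p_0\in(0,1)$ and $p_1\in(0,1-p_0)$, and set $\mathbf{B}_0=p_0\mathbf{B}$ and $\mathbf{B}_1=\mathbf{B}_0+p_1\mathbf{B}=(p_0+p_1)\mathbf{B}$. Then $\mathbf{B}\succ\mathbf{B}_1\succ\mathbf{B}_0$, i.e. $\rho_{\mathbf{B}}>\rho_{\mathbf{B}_1}>\rho_{\mathbf{B}_0}$.
   Context: For a symmetric $\mathbf{B}\in(0,1)^{K\times K}$ with $d_+\ge1$ strictly positive and $d_-\ge 0$ strictly negative eigenvalues, let $d=d_++d_-$ and $\mathbf{I}_{d_+d_-}=\mathrm{diag}(\mathbf{I}_{d_+},-\mathbf{I}_{d_-})$. Write $\mathbf{B}=\mathbf{U}\mathbf{S}\mathbf{U}^\top$ where $\mathbf{S}\in\mathbb{R}^{d\times d}$ is the diagonal matrix of nonzero eigenvalues (positive ones first) and $\mathbf{U}\in\mathbb{R}^{K\times d}$ has orthonormal columns, and set $\boldsymbol{\nu}=\mathbf{U}|\mathbf{S}|^{1/2}\in\mathbb{R}^{K\times d}$ with rows $\boldsymbol{\nu}_1,\dots,\boldsymbol{\nu}_K$, so that $\boldsymbol{\nu}_k^\top\mathbf{I}_{d_+d_-}\boldsymbol{\nu}_\ell=\mathbf{B}_{k\ell}$. Given block assignment probabilities $\boldsymbol{\pi}\in(0,1)^K$ summing to one, define $\boldsymbol{\Delta}=\sum_{\ell=1}^K\pi_\ell\boldsymbol{\nu}_\ell\boldsymbol{\nu}_\ell^\top$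 and, for each $k$, $$\boldsymbol{\Sigma}_k=\mathbf{I}_{d_+d_-}\boldsymbol{\Delta}^{-1}\Big[\sum_{\ell=1}^K\pi_\ell\,\mathbf{B}_{k\ell}(1-\mathbf{B}_{k\ell})\,\boldsymbol{\nu}_\ell\boldsymbol{\nu}_\ell^\top\Big]\boldsymbol{\Delta}^{-1}\mathbf{I}_{d_+d_-}.$$ For $t\in(0,1)$ let $\boldsymbol{\Sigma}_{k\ell}(t)=t\boldsymbol{\Sigma}_k+(1-t)\boldsymbol{\Sigma}_\ell$, and define $$C_{k,\ell}(\mathbf{B},\boldsymbol{\pi})=\sup_{t\in(0,1)}\Big[t(1-t)(\boldsymbol{\nu}_k-\boldsymbol{\nu}_\ell)^\top\boldsymbol{\Sigma}_{k\ell}(t)^{-1}(\boldsymbol{\nu}_k-\boldsymbol{\nu}_\ell)\Big],$$ and the (approximate) Chernoff information $\rho_{\mathbf{B}}=\min_{k\neq\ell}C_{k,\ell}(\mathbf{B},\boldsymbol{\pi})$. For two such matrices $\mathbf{B},\mathbf{B}'$ with the same $\boldsymbol{\pi}$, $\mathbf{B}$ is called Chernoff superior to $\mathbf{B}'$, written $\mathbf{B}\succ\mathbf{B}'$, if $\rho_{\mathbf{B}}>\rho_{\mathbf{B}'}$. *)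

theory Defs
  imports "Jordan_Normal_Form.Gauss_Jordan_Elimination"
begin

definition spec_decomp :: "real mat \<Rightarrow> nat \<Rightarrow> nat \<Rightarrow> real mat \<Rightarrow> real mat \<Rightarrow> bool" where
  "spec_decomp B dp dm U S \<longleftrightarrow>
     1 \<le> dp \<and>
     U \<in> carrier_mat (dim_row B) (dp + dm) \<and>
     S \<in> carrier_mat (dp + dm) (dp + dm) \<and>
     diagonal_mat S \<and>
     (\<forall>i<dp. S $$ (i,i) > 0) \<and>
     (\<forall>i. dp \<le> i \<and> i < dp + dm \<longrightarrow> S $$ (i,i) < 0) \<and>
     transpose_mat U * U = 1\<^sub>m (dp + dm) \<and>
     B = U * S * transpose_mat U"

definition Ipm :: "nat \<Rightarrow> nat \<Rightarrow> real mat" where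
  "Ipm dp dm = mat (dp + dm) (dp + dm) (\<lambda>(i,j). if i = j then (if i < dp then 1 else -1) else 0)"

definition nu_mat :: "real mat \<Rightarrow> real mat \<Rightarrow> real mat" where
  "nu_mat U S = U * mat (dim_row S) (dim_col S) (\<lambda>(i,j). if i = j then sqrt \<bar>S $$ (i,i)\<bar> else 0)"

definition minv :: "real mat \<Rightarrow> real mat" where
  "minv A = the (mat_inverse A)"

definition Delta_mat :: "nat \<Rightarrow> (nat \<Rightarrow> real) \<Rightarrow> real mat \<Rightarrow> real mat" where
  "Delta_mat K ppi nu = mat (dim_col nu) (dim_col nu)
     (\<lambda>(i,j). \<Sum>l<K. ppi l * nu $$ (l,i) * nu $$ (l,j))"

definition Sigma_mat :: "real mat \<Rightarrow> (nat \<Rightarrow> real) \<Rightarrow> nat \<Rightarrow> nat \<Rightarrow> real mat \<Rightarrow> nat \<Rightarrow> real mat" where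
  "Sigma_mat B ppi dp dm nu k =
     (let K = dim_row B; Di = minv (Delta_mat K ppi nu);
          M = mat (dim_col nu) (dim_col nu)
                (\<lambda>(i,j). \<Sum>l<K. ppi l * B $$ (k,l) * (1 - B $$ (k,l)) * nu $$ (l,i) * nu $$ (l,j))
      in Ipm dp dm * Di * M * Di * Ipm dp dm)"

definition C_kl :: "real mat \<Rightarrow> (nat \<Rightarrow> real) \<Rightarrow> nat \<Rightarrow> nat \<Rightarrow> real mat \<Rightarrow> nat \<Rightarrow> nat \<Rightarrow> real" where
  "C_kl B ppi dp dm nu k l =
     (SUP t\<in>{0<..<1::real}.
        (let x = row nu k - row nu l;
             St = t \<cdot>\<^sub>m Sigma_mat B ppi dp dm nu k + (1 - t) \<cdot>\<^sub>m Sigma_mat B ppi dp dm nu l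
         in t * (1 - t) * (x \<bullet> (minv St *\<^sub>v x))))"

definition rho_emb :: "real mat \<Rightarrow> (nat \<Rightarrow> real) \<Rightarrow> nat \<Rightarrow> nat \<Rightarrow> real mat \<Rightarrow> real" where
  "rho_emb B ppi dp dm nu =
     Min {C_kl B ppi dp dm nu k l | k l. k < dim_row B \<and> l < dim_row B \<and> k \<noteq> l}"

text \<open>Chernoff information rho_B, computed from a (chosen) decomposition B = U S U^T.\<close>
definition chernoff_rho :: "real mat \<Rightarrow> (nat \<Rightarrow> real) \<Rightarrow> real" where
  "chernoff_rho B ppi =
     (case (SOME x. case x of (dp, dm, U, S) \<Rightarrow> spec_decomp B dp dm U S) of
        (dp, dm, U, S) \<Rightarrow> rho_emb B ppi dp dm (nu_mat U S))"

definition chernoff_superior :: "real mat \<Rightarrow> real mat \<Rightarrow> (nat \<Rightarrow> real) \<Rightarrow> bool" where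
  "chernoff_superior B B' ppi \<longleftrightarrow> chernoff_rho B ppi > chernoff_rho B' ppi"

end

theory Submission imports Defs "Jordan_Normal_Form.Char_Poly" "HOL-Computational_Algebra.Fundamental_Theorem_Algebra"
begin

lemma complex_eigen:
  fixes A :: "real mat"
  assumes A: "A \<in> carrier_mat n n" and n: "n > 0"
  shows "\<exists>z v. v \<in> carrier_vec n \<and> v \<noteq> 0\<^sub>v n \<and> map_mat complex_of_real A *\<^sub>v v = z \<cdot>\<^sub>v v"
proof -
  let ?A = "map_mat complex_of_real A"
  have Ac: "?A \<in> carrier_mat n n" using A by auto
  have "degree (char_poly ?A) = n" using degree_monic_char_poly[OF Ac] by auto
  hence "\<not> constant (poly (char_poly ?A))" using n constant_degree[of "char_poly ?A"] by auto
  then obtain z where "poly (char_poly ?A) z = 0" using fundamental_theorem_of_algebra by blast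
  hence "eigenvalue ?A z" using eigenvalue_root_char_poly[OF Ac] by auto
  thus ?thesis unfolding eigenvalue_def eigenvector_def using Ac by auto
qed

lemma real_eigen:
  fixes A :: "real mat"
  assumes A: "A \<in> carrier_mat n n" and n: "n > 0" and sym: "transpose_mat A = A"
  shows "\<exists>r w. w \<in> carrier_vec n \<and> w \<noteq> 0\<^sub>v n \<and> A *\<^sub>v w = r \<cdot>\<^sub>v w"
proof -
  obtain z v where v: "v \<in> carrier_vec n" "v \<noteq> 0\<^sub>v n"
    and ev: "map_mat complex_of_real A *\<^sub>v v = z \<cdot>\<^sub>v v"
    using complex_eigen[OF A n] by blast
  have symA: "\<And>i j. i < n \<Longrightarrow> j < n \<Longrightarrow> A $$ (i,j) = A $$ (j,i)"
    using sym A by (metis carrier_matD index_transpose_mat(1))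
  have evi: "\<And>i. i < n \<Longrightarrow> (\<Sum>j<n. complex_of_real (A $$ (i,j)) * v $ j) = z * v $ i"
  proof -
    fix i assume i: "i < n"
    have "(map_mat complex_of_real A *\<^sub>v v) $ i = z * v $ i" using ev i v by simp
    thus "(\<Sum>j<n. complex_of_real (A $$ (i,j)) * v $ j) = z * v $ i"
      using i A v by (simp add: mult_mat_vec_def scalar_prod_def atLeast0LessThan)
  qed
  define s where "s = (\<Sum>i<n. cnj (v $ i) * (\<Sum>j<n. complex_of_real (A $$ (i,j)) * v $ j))"
  define N where "N = (\<Sum>i<n. cnj (v $ i) * v $ i)"
  have sN: "s = z * N" unfolding s_def N_def using evi
    by (simp add: sum_distrib_left mult_ac)
  have "cnj s = (\<Sum>i<n. \<Sum>j<n. v $ i * complex_of_real (A $$ (i,j)) * cnj (v $ j))"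
    unfolding s_def by (simp add: sum_distrib_left mult_ac)
  also have "\<dots> = (\<Sum>j<n. \<Sum>i<n. v $ i * complex_of_real (A $$ (i,j)) * cnj (v $ j))"
    by (rule sum.swap)
  also have "\<dots> = s" unfolding s_def
    by (auto simp: sum_distrib_left mult_ac symA intro!: sum.cong)
  finally have sreal: "cnj s = s" .
  have Nre: "N = complex_of_real (\<Sum>i<n. (cmod (v $ i))^2)"
    unfolding N_def of_real_sum by (intro sum.cong) (auto simp: complex_norm_square[symmetric] mult.commute)
  obtain i where i: "i < n" "v $ i \<noteq> 0" using v by (metis eq_vecI carrier_vecD index_zero_vec)
  have "(\<Sum>i<n. (cmod (v $ i))^2) > 0"
    by (rule sum_pos2[of _ i]) (use i in auto)
  hence N0: "N \<noteq> 0" unfolding Nre by (metis less_irrefl of_real_eq_0_iff)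
  have cN: "cnj N = N" unfolding Nre by (rule complex_cnj_complex_of_real)
  have "cnj z = z"
  proof -
    have "cnj z * N = z * N" using sN sreal cN by (metis complex_cnj_mult)
    thus ?thesis using N0 by simp
  qed
  then obtain r where zr: "z = complex_of_real r" by (metis Reals_cnj_iff Reals_cases)
  define a where "a = vec n (\<lambda>i. Re (v $ i))"
  define b where "b = vec n (\<lambda>i. Im (v $ i))"
  have ea: "A *\<^sub>v a = r \<cdot>\<^sub>v a"
  proof (rule eq_vecI)
    fix i assume "i < dim_vec (r \<cdot>\<^sub>v a)"
    hence i: "i < n" unfolding a_def by simp
    have "Re (\<Sum>j<n. complex_of_real (A $$ (i,j)) * v $ j) = Re (z * v $ i)" using evi[OF i] by simp
    thus "(A *\<^sub>v a) $ i = (r \<cdot>\<^sub>v a) $ i" using i A zr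
      by (simp add: a_def mult_mat_vec_def scalar_prod_def atLeast0LessThan Re_sum)
  qed (use A a_def in auto)
  have eb: "A *\<^sub>v b = r \<cdot>\<^sub>v b"
  proof (rule eq_vecI)
    fix i assume "i < dim_vec (r \<cdot>\<^sub>v b)"
    hence i: "i < n" unfolding b_def by simp
    have "Im (\<Sum>j<n. complex_of_real (A $$ (i,j)) * v $ j) = Im (z * v $ i)" using evi[OF i] by simp
    thus "(A *\<^sub>v b) $ i = (r \<cdot>\<^sub>v b) $ i" using i A zr
      by (simp add: b_def mult_mat_vec_def scalar_prod_def atLeast0LessThan Im_sum)
  qed (use A b_def in auto)
  have "a \<noteq> 0\<^sub>v n \<or> b \<noteq> 0\<^sub>v n"
  proof (rule ccontr)
    assume "\<not> ?thesis"
    hence "a $ i = 0" "b $ i = 0" using i by auto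
    hence "v $ i = 0" using i unfolding a_def b_def by (simp add: complex_eq_iff)
    thus False using i by simp
  qed
  thus ?thesis using ea eb a_def b_def by (metis vec_carrier)
qed

lemma mat_eq_by_units:
  fixes A B :: "'a::semiring_1 mat"
  assumes A: "A \<in> carrier_mat nr m" and B: "B \<in> carrier_mat nr m"
    and eq: "\<And>i. i < m \<Longrightarrow> A *\<^sub>v unit_vec m i = B *\<^sub>v unit_vec m i"
  shows "A = B"
proof (rule eq_matI)
  fix j i assume j: "j < dim_row B" and i: "i < dim_col B"
  have "(A *\<^sub>v unit_vec m i) $ j = (B *\<^sub>v unit_vec m i) $ j" using eq i B by auto
  thus "A $$ (j, i) = B $$ (j, i)" using A B i j by auto
qed (use A B in auto)

lemma unit_vec_mult: fixes A :: "'a::semiring_1 mat" assumes A: "A \<in> carrier_mat nr m" and i: "i < m" and j: "j < nr"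
  shows "(A *\<^sub>v unit_vec m i) $ j = A $$ (j,i)"
proof -
  have "(A *\<^sub>v unit_vec m i) $ j = row A j \<bullet> unit_vec m i" using A j by auto
  also have "\<dots> = row A j $ i" using i by (rule scalar_prod_right_unit)
  finally show ?thesis using A i j by auto
qed

lemma vec_self_pos:
  fixes v :: "real vec"
  assumes v: "v \<in> carrier_vec n" "v \<noteq> 0\<^sub>v n"
  shows "v \<bullet> v > 0"
proof -
  obtain i where i: "i < n" "v $ i \<noteq> 0" using v by (metis eq_vecI carrier_vecD index_zero_vec)
  have "v \<bullet> v = (\<Sum>j\<in>{0..<n}. (v $ j)^2)" using v by (simp add: scalar_prod_def power2_eq_square)
  also have "\<dots> > 0" by (rule sum_pos2[of _ i]) (use i in auto)
  finally show ?thesis .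
qed

definition hh :: "nat \<Rightarrow> real vec \<Rightarrow> nat \<Rightarrow> real mat" where
  "hh n u k = (let w = u - unit_vec n k; a = 2 / (w \<bullet> w) in
     if u = unit_vec n k then 1\<^sub>m n else mat n n (\<lambda>(i,j). (if i = j then 1 else 0) - a * w $ i * w $ j))"

lemma hh_props:
  assumes u: "u \<in> carrier_vec n" and uu: "u \<bullet> u = 1" and k: "k < n"
  shows "hh n u k \<in> carrier_mat n n" "transpose_mat (hh n u k) = hh n u k"
    "hh n u k * hh n u k = 1\<^sub>m n" "hh n u k *\<^sub>v unit_vec n k = u"
    "\<And>i. i < n \<Longrightarrow> i \<noteq> k \<Longrightarrow> u $ i = 0 \<Longrightarrow> hh n u k *\<^sub>v unit_vec n i = unit_vec n i"
proof -
  let ?H = "hh n u k"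
  show Hc: "?H \<in> carrier_mat n n" unfolding hh_def Let_def by auto
  have "transpose_mat ?H = ?H \<and> ?H * ?H = 1\<^sub>m n \<and> ?H *\<^sub>v unit_vec n k = u \<and>
     (\<forall>i<n. i \<noteq> k \<longrightarrow> u $ i = 0 \<longrightarrow> ?H *\<^sub>v unit_vec n i = unit_vec n i)"
  proof (cases "u = unit_vec n k")
    case True
    thus ?thesis unfolding hh_def by auto
  next
    case False
    define w where "w = u - unit_vec n k"
    define a where "a = 2 / (w \<bullet> w)"
    have w: "w \<in> carrier_vec n" unfolding w_def using u by auto
    have w0: "w \<noteq> 0\<^sub>v n"
    proof
      assume "w = 0\<^sub>v n"
      hence "u = unit_vec n k" unfolding w_def using u
        by (metis carrier_vecD index_minus_vec(1) index_unit_vec(3) index_zero_vec(1) eq_vecI right_minus_eq)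
      thus False using False by simp
    qed
    have wwp: "w \<bullet> w > 0" using vec_self_pos[OF w w0] .
    have aw: "a * (w \<bullet> w) = 2" unfolding a_def using wwp by simp
    have H: "?H = mat n n (\<lambda>(i,j). (if i = j then 1 else 0) - a * w $ i * w $ j)"
      unfolding hh_def Let_def w_def[symmetric] a_def[symmetric] using False by simp
    have hv: "\<And>x. x \<in> carrier_vec n \<Longrightarrow> ?H *\<^sub>v x = x - (a * (w \<bullet> x)) \<cdot>\<^sub>v w"
    proof -
      fix x :: "real vec" assume x: "x \<in> carrier_vec n"
      show "?H *\<^sub>v x = x - (a * (w \<bullet> x)) \<cdot>\<^sub>v w"
      proof (rule eq_vecI)
        fix i assume "i < dim_vec (x - (a * (w \<bullet> x)) \<cdot>\<^sub>v w)"
        hence i: "i < n" using x w by auto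
        have "(?H *\<^sub>v x) $ i = (\<Sum>j\<in>{0..<n}. ((if i = j then 1 else 0) - a * w $ i * w $ j) * x $ j)"
          using i x unfolding H by (simp add: scalar_prod_def)
        also have "\<dots> = (\<Sum>j\<in>{0..<n}. (if i = j then x $ j else 0) - a * w $ i * (w $ j * x $ j))"
          by (rule sum.cong) (auto simp: algebra_simps)
        also have "\<dots> = (\<Sum>j\<in>{0..<n}. (if i = j then x $ j else 0)) - a * w $ i * (\<Sum>j\<in>{0..<n}. w $ j * x $ j)"
          by (simp add: sum_subtractf sum_distrib_left)
        also have "\<dots> = x $ i - a * w $ i * (w \<bullet> x)" using i x by (simp add: scalar_prod_def)
        finally show "(?H *\<^sub>v x) $ i = (x - (a * (w \<bullet> x)) \<cdot>\<^sub>v w) $ i" using i x w by simp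
      qed (use x w H in auto)
    qed
    have HH: "\<And>x. x \<in> carrier_vec n \<Longrightarrow> ?H *\<^sub>v (?H *\<^sub>v x) = x"
    proof -
      fix x :: "real vec" assume x: "x \<in> carrier_vec n"
      have Hx: "?H *\<^sub>v x \<in> carrier_vec n" using Hc x by auto
      have "w \<bullet> (?H *\<^sub>v x) = w \<bullet> x - (a * (w \<bullet> x)) * (w \<bullet> w)"
        unfolding hv[OF x] using w x by (simp add: scalar_prod_minus_distrib[of w n])
      also have "\<dots> = - (w \<bullet> x)" using aw by (simp add: algebra_simps)
      finally have e: "w \<bullet> (?H *\<^sub>v x) = - (w \<bullet> x)" .
      show "?H *\<^sub>v (?H *\<^sub>v x) = x"
        unfolding hv[OF Hx] e unfolding hv[OF x] using x w by (intro eq_vecI) auto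
    qed
    have "transpose_mat ?H = ?H" unfolding H by (intro eq_matI) auto
    moreover have "?H * ?H = 1\<^sub>m n"
    proof (rule mat_eq_by_units[of _ n n])
      fix i assume i: "i < n"
      show "(?H * ?H) *\<^sub>v unit_vec n i = 1\<^sub>m n *\<^sub>v unit_vec n i"
        using HH[of "unit_vec n i"] Hc by simp
    qed (use Hc in auto)
    moreover have "?H *\<^sub>v unit_vec n k = u"
    proof -
      have "w \<bullet> unit_vec n k = w $ k" using k by simp
      also have "\<dots> = u $ k - 1" unfolding w_def using u k by simp
      finally have wk: "w \<bullet> unit_vec n k = u $ k - 1" .
      have "w \<bullet> w = u \<bullet> u - 2 * (u $ k) + 1"
      proof -
        have e: "unit_vec n k \<in> carrier_vec n" by simp
        have "w \<bullet> w = u \<bullet> (u - unit_vec n k) - unit_vec n k \<bullet> (u - unit_vec n k)"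
          unfolding w_def using u by (simp add: minus_scalar_prod_distrib[OF u e])
        also have "\<dots> = u \<bullet> u - u \<bullet> unit_vec n k - (unit_vec n k \<bullet> u - unit_vec n k \<bullet> unit_vec n k)"
          using scalar_prod_minus_distrib[OF u u e] scalar_prod_minus_distrib[OF e u e] by simp
        also have "\<dots> = u \<bullet> u - 2 * (u $ k) + 1" using u k by simp
        finally show ?thesis .
      qed
      hence ww: "w \<bullet> w = 2 - 2 * u $ k" using uu by simp
      have "a * (w \<bullet> unit_vec n k) = -1" unfolding wk a_def ww using wwp ww
        by (simp add: field_simps)
      hence "?H *\<^sub>v unit_vec n k = unit_vec n k + w" unfolding hv[OF unit_vec_carrier]
        using w by (intro eq_vecI) auto
      thus ?thesis unfolding w_def using u by (intro eq_vecI) auto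
    qed
    moreover have "\<forall>i<n. i \<noteq> k \<longrightarrow> u $ i = 0 \<longrightarrow> ?H *\<^sub>v unit_vec n i = unit_vec n i"
    proof (intro allI impI)
      fix i assume i: "i < n" "i \<noteq> k" "u $ i = 0"
      have "w \<bullet> unit_vec n i = 0" using i u k unfolding w_def by simp
      thus "?H *\<^sub>v unit_vec n i = unit_vec n i" unfolding hv[OF unit_vec_carrier]
        using w by (intro eq_vecI) auto
    qed
    ultimately show ?thesis by blast
  qed
  thus "transpose_mat ?H = ?H" "?H * ?H = 1\<^sub>m n" "?H *\<^sub>v unit_vec n k = u"
    "\<And>i. i < n \<Longrightarrow> i \<noteq> k \<Longrightarrow> u $ i = 0 \<Longrightarrow> ?H *\<^sub>v unit_vec n i = unit_vec n i" by auto
qed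


lemma sym_conj:
  fixes A V :: "real mat"
  assumes A: "A \<in> carrier_mat n n" and V: "V \<in> carrier_mat n m" and sym: "transpose_mat A = A"
  shows "transpose_mat (transpose_mat V * A * V) = transpose_mat V * A * V"
proof -
  have "transpose_mat (transpose_mat V * A * V) = transpose_mat V * transpose_mat (transpose_mat V * A)"
    using A V by (subst transpose_mult[of _ m n]) auto
  also have "transpose_mat (transpose_mat V * A) = transpose_mat A * V"
    using A V by (subst transpose_mult[of _ m n]) auto
  finally show ?thesis using A V sym by (simp add: assoc_mult_mat[of _ m n _ n _ m])
qed

lemma spectral_aux:
  fixes A :: "real mat"
  assumes A: "A \<in> carrier_mat n n" and sym: "transpose_mat A = A"
  shows "k \<le> n \<Longrightarrow> \<exists>V \<in> carrier_mat n n. transpose_mat V * V = 1\<^sub>m n \<and>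
     (\<forall>i<k. \<exists>c. (transpose_mat V * A * V) *\<^sub>v unit_vec n i = c \<cdot>\<^sub>v unit_vec n i)"
proof (induction k)
  case 0
  show ?case by (intro bexI[of _ "1\<^sub>m n"]) auto
next
  case (Suc k)
  hence kn: "k < n" by auto
  then obtain V where V: "V \<in> carrier_mat n n" and VV: "transpose_mat V * V = 1\<^sub>m n"
    and cols: "\<forall>i<k. \<exists>c. (transpose_mat V * A * V) *\<^sub>v unit_vec n i = c \<cdot>\<^sub>v unit_vec n i"
    using Suc by auto
  define A' where "A' = transpose_mat V * A * V"
  have A'c: "A' \<in> carrier_mat n n" unfolding A'_def using A V by auto
  have symA': "transpose_mat A' = A'" unfolding A'_def by (rule sym_conj[OF A V sym])
  have symA'e: "\<And>i j. i < n \<Longrightarrow> j < n \<Longrightarrow> A' $$ (i,j) = A' $$ (j,i)"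
    using symA' A'c by (metis carrier_matD index_transpose_mat(1))
  have col0: "\<And>i j. i < k \<Longrightarrow> j < n \<Longrightarrow> j \<noteq> i \<Longrightarrow> A' $$ (j,i) = 0"
  proof -
    fix i j assume ij: "i < k" "j < n" "j \<noteq> i"
    obtain c where c: "A' *\<^sub>v unit_vec n i = c \<cdot>\<^sub>v unit_vec n i" using cols ij unfolding A'_def by auto
    have "A' $$ (j,i) = (A' *\<^sub>v unit_vec n i) $ j" using unit_vec_mult[OF A'c, of i j] ij kn by simp
    also have "\<dots> = 0" unfolding c using ij kn by simp
    finally show "A' $$ (j,i) = 0" .
  qed
  have row0: "\<And>i j. i < k \<Longrightarrow> j < n \<Longrightarrow> j \<noteq> i \<Longrightarrow> A' $$ (i,j) = 0"
    using col0 symA'e kn by (metis less_trans)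
  define m where "m = n - k"
  have m: "m > 0" unfolding m_def using kn by auto
  define A2 where "A2 = mat m m (\<lambda>(i,j). A' $$ (i+k, j+k))"
  have A2c: "A2 \<in> carrier_mat m m" unfolding A2_def by auto
  have symA2: "transpose_mat A2 = A2" unfolding A2_def
    by (intro eq_matI) (auto simp: m_def symA'e)
  obtain r u2 where u2: "u2 \<in> carrier_vec m" "u2 \<noteq> 0\<^sub>v m" and eu2: "A2 *\<^sub>v u2 = r \<cdot>\<^sub>v u2"
    using real_eigen[OF A2c m symA2] by blast
  define u0 where "u0 = vec n (\<lambda>i. if i < k then 0 else u2 $ (i - k))"
  have u0c: "u0 \<in> carrier_vec n" unfolding u0_def by auto
  have u0nz: "u0 \<noteq> 0\<^sub>v n"
  proof
    assume z: "u0 = 0\<^sub>v n"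
    have "u2 = 0\<^sub>v m"
    proof (rule eq_vecI)
      fix i assume "i < dim_vec (0\<^sub>v m :: real vec)"
      hence i: "i < m" by simp
      have "u0 $ (i + k) = 0" using z i m_def by simp
      thus "u2 $ i = 0\<^sub>v m $ i" using i unfolding u0_def m_def by simp
    qed (use u2 in auto)
    thus False using u2 by simp
  qed
  have eu0: "A' *\<^sub>v u0 = r \<cdot>\<^sub>v u0"
  proof (rule eq_vecI)
    fix i assume "i < dim_vec (r \<cdot>\<^sub>v u0)"
    hence i: "i < n" unfolding u0_def by simp
    have "(A' *\<^sub>v u0) $ i = (\<Sum>j\<in>{0..<n}. A' $$ (i,j) * u0 $ j)"
      using i A'c u0c by (simp add: scalar_prod_def)
    also have "\<dots> = (\<Sum>j\<in>{0..<k}. A' $$ (i,j) * u0 $ j) + (\<Sum>j\<in>{k..<n}. A' $$ (i,j) * u0 $ j)"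
      using kn by (metis (no_types, lifting) le_eq_less_or_eq sum.atLeastLessThan_concat zero_le)
    also have "(\<Sum>j\<in>{0..<k}. A' $$ (i,j) * u0 $ j) = 0"
      using kn by (intro sum.neutral) (auto simp: u0_def)
    also have "(\<Sum>j\<in>{k..<n}. A' $$ (i,j) * u0 $ j) = (\<Sum>j\<in>{0+k..<m+k}. A' $$ (i,j) * u0 $ j)"
      using kn m_def by simp
    also have "\<dots> = (\<Sum>j\<in>{0..<m}. A' $$ (i,j+k) * u2 $ j)"
      unfolding sum.shift_bounds_nat_ivl using m_def by (intro sum.cong) (auto simp: u0_def)
    finally have s: "(A' *\<^sub>v u0) $ i = (\<Sum>j\<in>{0..<m}. A' $$ (i,j+k) * u2 $ j)" by simp
    show "(A' *\<^sub>v u0) $ i = (r \<cdot>\<^sub>v u0) $ i"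
    proof (cases "i < k")
      case True
      have "(\<Sum>j\<in>{0..<m}. A' $$ (i,j+k) * u2 $ j) = 0"
        using True m_def by (intro sum.neutral) (auto simp: row0)
      thus ?thesis using s True i u0_def by simp
    next
      case False
      have ik: "i - k < m" using i False m_def by simp
      have "(A2 *\<^sub>v u2) $ (i - k) = (\<Sum>j\<in>{0..<m}. A2 $$ (i - k, j) * u2 $ j)"
        using ik A2c u2 by (simp add: scalar_prod_def)
      also have "\<dots> = (\<Sum>j\<in>{0..<m}. A' $$ (i,j+k) * u2 $ j)"
        unfolding A2_def using ik False by (intro sum.cong) auto
      finally have "(A' *\<^sub>v u0) $ i = r * u2 $ (i - k)" using s eu2 ik u2 by simp
      thus ?thesis using False i u0_def by simp
    qed
  qed (use A'c u0c in auto)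
  define s where "s = u0 \<bullet> u0"
  have s: "s > 0" unfolding s_def by (rule vec_self_pos[OF u0c u0nz])
  define u where "u = (1 / sqrt s) \<cdot>\<^sub>v u0"
  have uc: "u \<in> carrier_vec n" unfolding u_def using u0c by auto
  have uu: "u \<bullet> u = 1" unfolding u_def using u0c s
    by (simp add: s_def[symmetric] power2_eq_square[symmetric])
  have eu: "A' *\<^sub>v u = r \<cdot>\<^sub>v u" unfolding u_def using mult_mat_vec[OF A'c u0c] eu0
    by (auto simp: smult_smult_assoc mult.commute)
  have u_low: "\<And>i. i < k \<Longrightarrow> u $ i = 0" unfolding u_def u0_def using kn by simp
  define H where "H = hh n u k"
  note hp = hh_props[OF uc uu kn, folded H_def]
  have Hc: "H \<in> carrier_mat n n" using hp by auto
  define V' where "V' = V * H"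
  have V'c: "V' \<in> carrier_mat n n" unfolding V'_def using V Hc by auto
  have tV': "transpose_mat V' = H * transpose_mat V"
    unfolding V'_def using transpose_mult[OF V Hc] hp by simp
  have "transpose_mat V' * V' = H * (transpose_mat V * V) * H"
    unfolding tV' unfolding V'_def using V Hc by (simp add: assoc_mult_mat[of _ n n _ n _ n])
  also have "\<dots> = 1\<^sub>m n" using VV hp Hc by simp
  finally have V'V': "transpose_mat V' * V' = 1\<^sub>m n" .
  have An: "transpose_mat V' * A * V' = H * A' * H"
    unfolding tV' unfolding V'_def A'_def using V Hc A by (simp add: assoc_mult_mat[of _ n n _ n _ n])
  have "\<forall>i<Suc k. \<exists>c. (transpose_mat V' * A * V') *\<^sub>v unit_vec n i = c \<cdot>\<^sub>v unit_vec n i"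
  proof (intro allI impI)
    fix i assume i: "i < Suc k"
    have mv: "\<And>x. x \<in> carrier_vec n \<Longrightarrow> (H * A' * H) *\<^sub>v x = H *\<^sub>v (A' *\<^sub>v (H *\<^sub>v x))"
      using Hc A'c by (simp add: assoc_mult_mat_vec[of _ n n _ n])
    show "\<exists>c. (transpose_mat V' * A * V') *\<^sub>v unit_vec n i = c \<cdot>\<^sub>v unit_vec n i"
    proof (cases "i < k")
      case True
      obtain c where c: "A' *\<^sub>v unit_vec n i = c \<cdot>\<^sub>v unit_vec n i" using cols True unfolding A'_def by auto
      have He: "H *\<^sub>v unit_vec n i = unit_vec n i" using hp(5)[of i] True kn u_low by simp
      have "(H * A' * H) *\<^sub>v unit_vec n i = c \<cdot>\<^sub>v unit_vec n i"
        unfolding mv[OF unit_vec_carrier] He c using mult_mat_vec[OF Hc unit_vec_carrier] He by simp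
      thus ?thesis unfolding An by blast
    next
      case False
      hence ik: "i = k" using i by simp
      have "H *\<^sub>v u = unit_vec n k" using hp(3,4) Hc
        by (metis assoc_mult_mat_vec one_mult_mat_vec unit_vec_carrier)
      hence "(H * A' * H) *\<^sub>v unit_vec n k = r \<cdot>\<^sub>v unit_vec n k"
        unfolding mv[OF unit_vec_carrier] hp(4) eu using mult_mat_vec[OF Hc uc] by simp
      thus ?thesis unfolding An ik by blast
    qed
  qed
  thus ?case using V'c V'V' by blast
qed

definition diag_of :: "nat \<Rightarrow> (nat \<Rightarrow> real) \<Rightarrow> real mat" where
  "diag_of n f = mat n n (\<lambda>(i,j). if i = j then f i else 0)"

lemma spectral:
  fixes A :: "real mat"
  assumes A: "A \<in> carrier_mat n n" and sym: "transpose_mat A = A"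
  shows "\<exists>V lam. V \<in> carrier_mat n n \<and> transpose_mat V * V = 1\<^sub>m n \<and> V * transpose_mat V = 1\<^sub>m n \<and>
     A = V * diag_of n lam * transpose_mat V"
proof -
  obtain V where V: "V \<in> carrier_mat n n" and VV: "transpose_mat V * V = 1\<^sub>m n"
    and cols: "\<forall>i<n. \<exists>c. (transpose_mat V * A * V) *\<^sub>v unit_vec n i = c \<cdot>\<^sub>v unit_vec n i"
    using spectral_aux[OF A sym, of n] by auto
  define D where "D = transpose_mat V * A * V"
  have Dc: "D \<in> carrier_mat n n" unfolding D_def using A V by auto
  have VV': "V * transpose_mat V = 1\<^sub>m n" using mat_mult_left_right_inverse[of "transpose_mat V" n V] V VV by auto
  have Dd: "D = diag_of n (\<lambda>i. D $$ (i,i))"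
  proof (rule mat_eq_by_units[of _ n n])
    fix i assume i: "i < n"
    obtain c where c: "D *\<^sub>v unit_vec n i = c \<cdot>\<^sub>v unit_vec n i" using cols i unfolding D_def by auto
    have Dii: "D $$ (i,i) = c" using unit_vec_mult[OF Dc i i] c i by simp
    show "D *\<^sub>v unit_vec n i = diag_of n (\<lambda>i. D $$ (i,i)) *\<^sub>v unit_vec n i"
    proof (rule eq_vecI)
      fix j assume j: "j < dim_vec (diag_of n (\<lambda>i. D $$ (i,i)) *\<^sub>v unit_vec n i)"
      hence j: "j < n" by (simp add: diag_of_def)
      have "(diag_of n (\<lambda>i. D $$ (i,i)) *\<^sub>v unit_vec n i) $ j = diag_of n (\<lambda>i. D $$ (i,i)) $$ (j,i)"
        by (rule unit_vec_mult[OF _ i j]) (simp add: diag_of_def)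
      thus "(D *\<^sub>v unit_vec n i) $ j = (diag_of n (\<lambda>i. D $$ (i,i)) *\<^sub>v unit_vec n i) $ j"
        unfolding c using i j Dii by (auto simp: diag_of_def)
    qed (use Dc in \<open>simp add: diag_of_def\<close>)
  qed (use Dc in \<open>auto simp: diag_of_def\<close>)
  have "V * D * transpose_mat V = (V * transpose_mat V) * A * (V * transpose_mat V)"
    unfolding D_def using V A by (simp add: assoc_mult_mat[of _ n n _ n _ n])
  also have "\<dots> = A" using VV' A by simp
  finally show ?thesis using V VV VV' Dd by metis
qed


lemma diag_prod_entry:
  fixes A C :: "real mat"
  assumes A: "A \<in> carrier_mat n d" and C: "C \<in> carrier_mat m d" and a: "a < n" and b: "b < m"
  shows "(A * diag_of d f * transpose_mat C) $$ (a,b) = (\<Sum>j<d. A $$ (a,j) * f j * C $$ (b,j))"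
proof -
  have "(A * diag_of d f * transpose_mat C) $$ (a,b) = (\<Sum>j\<in>{0..<d}. (A * diag_of d f) $$ (a,j) * C $$ (b,j))"
    using A C a b by (simp add: scalar_prod_def diag_of_def)
  also have "\<dots> = (\<Sum>j\<in>{0..<d}. A $$ (a,j) * f j * C $$ (b,j))"
  proof (rule sum.cong)
    fix j assume j: "j \<in> {0..<d}"
    have "(A * diag_of d f) $$ (a,j) = (\<Sum>l\<in>{0..<d}. A $$ (a,l) * (if l = j then f l else 0))"
      using A a j by (simp add: scalar_prod_def diag_of_def)
    also have "\<dots> = A $$ (a,j) * f j" using j by (simp add: if_distrib cong: if_cong)
    finally show "(A * diag_of d f) $$ (a,j) * C $$ (b,j) = A $$ (a,j) * f j * C $$ (b,j)" by simp
  qed simp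
  finally show ?thesis by (simp add: atLeast0LessThan)
qed

lemma spec_exists:
  fixes B :: "real mat"
  assumes B: "B \<in> carrier_mat K K" and sym: "transpose_mat B = B" and K: "0 < K"
    and B00: "B $$ (0,0) > 0"
  shows "\<exists>dp dm U S. spec_decomp B dp dm U S"
proof -
  obtain V lam where V: "V \<in> carrier_mat K K" and VV: "transpose_mat V * V = 1\<^sub>m K"
    and Bd: "B = V * diag_of K lam * transpose_mat V"
    using spectral[OF B sym] by blast
  define ps where "ps = filter (\<lambda>i. lam i > 0) [0..<K]"
  define ns where "ns = filter (\<lambda>i. lam i < 0) [0..<K]"
  define idx where "idx = ps @ ns"
  define dp where "dp = length ps"
  define dm where "dm = length ns"
  define d where "d = dp + dm"
  have ld: "length idx = d" unfolding idx_def d_def dp_def dm_def by simp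
  have dist: "distinct idx" unfolding idx_def ps_def ns_def by auto
  have setidx: "set idx = {i. i < K \<and> lam i \<noteq> 0}" unfolding idx_def ps_def ns_def by auto
  have idxK: "\<And>j. j < d \<Longrightarrow> idx ! j < K" using setidx ld by (metis (mono_tags) mem_Collect_eq nth_mem)
  define U where "U = mat K d (\<lambda>(a,j). V $$ (a, idx ! j))"
  define S where "S = diag_of d (\<lambda>j. lam (idx ! j))"
  have Uc: "U \<in> carrier_mat K d" unfolding U_def by auto
  have Sc: "S \<in> carrier_mat d d" unfolding S_def diag_of_def by auto
  have diagS: "diagonal_mat S" unfolding S_def diag_of_def diagonal_mat_def by auto
  have Spos: "\<forall>i<dp. S $$ (i,i) > 0"
  proof (intro allI impI)
    fix i assume i: "i < dp"
    have "idx ! i = ps ! i" unfolding idx_def using i dp_def by (simp add: nth_append)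
    moreover have "ps ! i \<in> set ps" using i dp_def by simp
    ultimately show "S $$ (i,i) > 0" using i unfolding S_def diag_of_def d_def ps_def by auto
  qed
  have Sneg: "\<forall>i. dp \<le> i \<and> i < dp + dm \<longrightarrow> S $$ (i,i) < 0"
  proof (intro allI impI)
    fix i assume i: "dp \<le> i \<and> i < dp + dm"
    have "idx ! i = ns ! (i - dp)" unfolding idx_def using i dp_def by (simp add: nth_append)
    moreover have "ns ! (i - dp) \<in> set ns" using i dm_def by auto
    ultimately show "S $$ (i,i) < 0" using i unfolding S_def diag_of_def d_def ns_def by auto
  qed
  have UU: "transpose_mat U * U = 1\<^sub>m d"
  proof (rule eq_matI)
    fix i j assume i: "i < dim_row (1\<^sub>m d :: real mat)" and j: "j < dim_col (1\<^sub>m d :: real mat)"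
    hence i: "i < d" and j: "j < d" by auto
    have "(transpose_mat U * U) $$ (i,j) = (\<Sum>a\<in>{0..<K}. V $$ (a, idx ! i) * V $$ (a, idx ! j))"
      using i j Uc by (simp add: scalar_prod_def U_def)
    also have "\<dots> = (transpose_mat V * V) $$ (idx ! i, idx ! j)"
      using V idxK i j by (simp add: scalar_prod_def)
    also have "\<dots> = (if i = j then 1 else 0)" unfolding VV using idxK i j dist ld
      by (simp add: nth_eq_iff_index_eq)
    finally show "(transpose_mat U * U) $$ (i,j) = 1\<^sub>m d $$ (i,j)" using i j by simp
  qed (use Uc in auto)
  have entry: "\<And>a b. a < K \<Longrightarrow> b < K \<Longrightarrow> B $$ (a,b) = (\<Sum>j<d. U $$ (a,j) * S $$ (j,j) * U $$ (b,j))"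
  proof -
    fix a b assume a: "a < K" and b: "b < K"
    have "B $$ (a,b) = (\<Sum>i<K. V $$ (a,i) * lam i * V $$ (b,i))"
      unfolding Bd by (rule diag_prod_entry[OF V V a b])
    also have "\<dots> = (\<Sum>i\<in>set idx. V $$ (a,i) * lam i * V $$ (b,i))"
      by (rule sum.mono_neutral_right) (auto simp: setidx)
    also have "\<dots> = (\<Sum>j<d. V $$ (a,idx ! j) * lam (idx ! j) * V $$ (b,idx ! j))"
      by (rule sum.reindex_bij_betw[symmetric], rule bij_betw_nth) (use dist ld in auto)
    also have "\<dots> = (\<Sum>j<d. U $$ (a,j) * S $$ (j,j) * U $$ (b,j))"
      using a b by (intro sum.cong) (auto simp: U_def S_def diag_of_def)
    finally show "B $$ (a,b) = (\<Sum>j<d. U $$ (a,j) * S $$ (j,j) * U $$ (b,j))" .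
  qed
  have BUSU: "B = U * S * transpose_mat U"
  proof (rule eq_matI)
    fix a b assume "a < dim_row (U * S * transpose_mat U)" "b < dim_col (U * S * transpose_mat U)"
    hence a: "a < K" and b: "b < K" using Uc by auto
    have "S = diag_of d (\<lambda>j. S $$ (j,j))" unfolding S_def diag_of_def by (intro eq_matI) auto
    hence "(U * S * transpose_mat U) $$ (a,b) = (\<Sum>j<d. U $$ (a,j) * S $$ (j,j) * U $$ (b,j))"
      using diag_prod_entry[OF Uc Uc a b, of "\<lambda>j. S $$ (j,j)"] by simp
    thus "B $$ (a,b) = (U * S * transpose_mat U) $$ (a,b)" using entry[OF a b] by simp
  qed (use B Uc in auto)
  have dp1: "1 \<le> dp"
  proof (rule ccontr)
    assume "\<not> 1 \<le> dp"
    hence dp0: "dp = 0" by simp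
    have "B $$ (0,0) = (\<Sum>j<d. U $$ (0,j) * S $$ (j,j) * U $$ (0,j))" using entry K by simp
    also have "\<dots> \<le> 0"
    proof (rule sum_nonpos)
      fix j assume "j \<in> {..<d}"
      hence "S $$ (j,j) < 0" using Sneg dp0 d_def by simp
      thus "U $$ (0,j) * S $$ (j,j) * U $$ (0,j) \<le> 0"
        by (metis mult.commute mult_le_0_iff mult_nonneg_nonneg less_imp_le zero_le_square mult.assoc)
    qed
    finally show False using B00 by simp
  qed
  have "spec_decomp B dp dm U S" unfolding spec_decomp_def
    using dp1 Uc Sc diagS Spos Sneg UU BUSU B d_def by auto
  thus ?thesis by blast
qed


lemma smult_mat_vec: fixes A :: "real mat" assumes A: "A \<in> carrier_mat n m" and v: "v \<in> carrier_vec m"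
  shows "(a \<cdot>\<^sub>m A) *\<^sub>v v = a \<cdot>\<^sub>v (A *\<^sub>v v)"
proof (rule eq_vecI)
  fix i assume "i < dim_vec (a \<cdot>\<^sub>v (A *\<^sub>v v))"
  hence i: "i < n" using A by simp
  have "row (a \<cdot>\<^sub>m A) i = a \<cdot>\<^sub>v row A i" using i A by (intro eq_vecI) auto
  thus "((a \<cdot>\<^sub>m A) *\<^sub>v v) $ i = (a \<cdot>\<^sub>v (A *\<^sub>v v)) $ i" using i A v by simp
qed (use A in simp)

lemma lin_vec: fixes A :: "real mat" assumes A: "A \<in> carrier_mat n m" and p: "p \<in> carrier_vec m" and q: "q \<in> carrier_vec m"
  shows "A *\<^sub>v (a \<cdot>\<^sub>v p + b \<cdot>\<^sub>v q) = a \<cdot>\<^sub>v (A *\<^sub>v p) + b \<cdot>\<^sub>v (A *\<^sub>v q)"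
  using A p q by (simp add: mult_add_distrib_mat_vec[of A n m] mult_mat_vec[OF A])

lemma minv_unique: fixes A Z :: "real mat"
  assumes A: "A \<in> carrier_mat n n" and Z: "Z \<in> carrier_mat n n" and AZ: "A * Z = 1\<^sub>m n"
  shows "minv A = Z"
proof -
  have "det A * det Z = 1" using det_mult[OF A Z] AZ by simp
  hence dA: "det A \<noteq> 0" by auto
  have "mat_inverse A \<noteq> None"
  proof
    assume "mat_inverse A = None"
    from mat_inverse(1)[OF A this, of "()"] det_non_zero_imp_unit[OF A dA, of "()"] show False by simp
  qed
  then obtain Y where Y: "mat_inverse A = Some Y" by auto
  from mat_inverse(2)[OF A Y] have AY: "A * Y = 1\<^sub>m n" and Yc: "Y \<in> carrier_mat n n" by auto
  have ZA: "Z * A = 1\<^sub>m n" using mat_mult_left_right_inverse[OF A Z AZ] .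
  have "Y = (Z * A) * Y" using Yc ZA by simp
  also have "\<dots> = Z * (A * Y)" using Z A Yc by (rule assoc_mult_mat)
  also have "\<dots> = Z" using AY Z by simp
  finally show ?thesis unfolding minv_def Y by simp
qed

lemma minv_exists: fixes A :: "real mat"
  assumes A: "A \<in> carrier_mat n n" and inj: "\<And>v. v \<in> carrier_vec n \<Longrightarrow> A *\<^sub>v v = 0\<^sub>v n \<Longrightarrow> v = 0\<^sub>v n"
  shows "A * minv A = 1\<^sub>m n \<and> minv A * A = 1\<^sub>m n \<and> minv A \<in> carrier_mat n n"
proof -
  have dA: "det A \<noteq> 0" using det_0_iff_vec_prod_zero[OF A] inj by blast
  have "mat_inverse A \<noteq> None"
  proof
    assume "mat_inverse A = None"
    from mat_inverse(1)[OF A this, of "()"] det_non_zero_imp_unit[OF A dA, of "()"] show False by simp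
  qed
  then obtain Y where Y: "mat_inverse A = Some Y" by auto
  thus ?thesis using mat_inverse(2)[OF A Y] unfolding minv_def by simp
qed

lemma diag_mult_vec: assumes v: "v \<in> carrier_vec n" and i: "i < n"
  shows "(diag_of n g *\<^sub>v v) $ i = g i * v $ i"
proof -
  have "(diag_of n g *\<^sub>v v) $ i = (\<Sum>j\<in>{0..<n}. (if i = j then g i else 0) * v $ j)"
    using v i by (simp add: diag_of_def scalar_prod_def)
  also have "\<dots> = (\<Sum>j\<in>{0..<n}. if j = i then g i * v $ i else 0)" by (rule sum.cong) auto
  also have "\<dots> = g i * v $ i" using i by simp
  finally show ?thesis .
qed

lemma tr_dot: fixes N :: "real mat"
  assumes N: "N \<in> carrier_mat K d" and v: "v \<in> carrier_vec d" and z: "z \<in> carrier_vec K"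
  shows "v \<bullet> (transpose_mat N *\<^sub>v z) = (N *\<^sub>v v) \<bullet> z"
proof -
  have "v \<bullet> (transpose_mat N *\<^sub>v z) = (transpose_mat N *\<^sub>v z) \<bullet> v"
    using N v z by (simp add: comm_scalar_prod[of _ d])
  also have "\<dots> = z \<bullet> (N *\<^sub>v v)" by (rule transpose_vec_mult_scalar[OF N v z])
  also have "\<dots> = (N *\<^sub>v v) \<bullet> z" using N v z by (simp add: comm_scalar_prod[of _ K])
  finally show ?thesis .
qed

lemma QF: fixes N :: "real mat"
  assumes N: "N \<in> carrier_mat K d" and v: "v \<in> carrier_vec d" and w: "w \<in> carrier_vec d"
  shows "v \<bullet> ((transpose_mat N * diag_of K g * N) *\<^sub>v w) = (\<Sum>l<K. g l * (N *\<^sub>v v) $ l * (N *\<^sub>v w) $ l)"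
proof -
  have G: "diag_of K g \<in> carrier_mat K K" by (simp add: diag_of_def)
  have "(transpose_mat N * diag_of K g * N) *\<^sub>v w = transpose_mat N *\<^sub>v (diag_of K g *\<^sub>v (N *\<^sub>v w))"
  proof -
    have "(transpose_mat N * diag_of K g * N) *\<^sub>v w = (transpose_mat N * diag_of K g) *\<^sub>v (N *\<^sub>v w)"
      by (rule assoc_mult_mat_vec[of _ d K _ d]) (use N G w in auto)
    also have "\<dots> = transpose_mat N *\<^sub>v (diag_of K g *\<^sub>v (N *\<^sub>v w))"
      by (rule assoc_mult_mat_vec[of _ d K _ K]) (use N G w in auto)
    finally show ?thesis .
  qed
  hence "v \<bullet> ((transpose_mat N * diag_of K g * N) *\<^sub>v w) = (N *\<^sub>v v) \<bullet> (diag_of K g *\<^sub>v (N *\<^sub>v w))"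
    using tr_dot[OF N v, of "diag_of K g *\<^sub>v (N *\<^sub>v w)"] N v w G by simp
  also have "\<dots> = (\<Sum>l\<in>{0..<K}. (N *\<^sub>v v) $ l * (g l * (N *\<^sub>v w) $ l))"
    unfolding scalar_prod_def using N v w G
    by (intro sum.cong) (auto simp del: index_mult_mat_vec simp add: diag_mult_vec)
  finally show ?thesis by (simp add: atLeast0LessThan mult_ac)
qed

lemma NtGN_entry: fixes N :: "real mat"
  assumes N: "N \<in> carrier_mat K d" and i: "i < d" and j: "j < d"
  shows "(transpose_mat N * diag_of K g * N) $$ (i,j) = (\<Sum>l<K. g l * N $$ (l,i) * N $$ (l,j))"
  using diag_prod_entry[of "transpose_mat N" d K "transpose_mat N" d i j g] N i j
  by (simp add: mult_ac)


lemma mult_diag_entry: fixes A :: "real mat"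
  assumes A: "A \<in> carrier_mat n d" and a: "a < n" and j: "j < d"
  shows "(A * diag_of d f) $$ (a,j) = A $$ (a,j) * f j"
proof -
  have "(A * diag_of d f) $$ (a,j) = (\<Sum>l\<in>{0..<d}. A $$ (a,l) * (if l = j then f l else 0))"
    using A a j by (simp add: scalar_prod_def diag_of_def)
  also have "\<dots> = A $$ (a,j) * f j" using j by (simp add: if_distrib cong: if_cong)
  finally show ?thesis .
qed

lemma assoc3: fixes A B C :: "real mat"
  assumes A: "A \<in> carrier_mat n1 n2" and B: "B \<in> carrier_mat n2 n3" and C: "C \<in> carrier_mat n3 n4"
    and v: "v \<in> carrier_vec n4"
  shows "(A * B * C) *\<^sub>v v = A *\<^sub>v (B *\<^sub>v (C *\<^sub>v v))"
proof -
  have "(A * B * C) *\<^sub>v v = (A * B) *\<^sub>v (C *\<^sub>v v)"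
    by (rule assoc_mult_mat_vec[of _ n1 n3 _ n4]) (use A B C v in auto)
  also have "\<dots> = A *\<^sub>v (B *\<^sub>v (C *\<^sub>v v))"
    by (rule assoc_mult_mat_vec[of _ n1 n2 _ n3]) (use A B C v in auto)
  finally show ?thesis .
qed

context
  fixes Bc U S :: "real mat" and K dp dm :: nat
  assumes Bc: "Bc \<in> carrier_mat K K" and sd: "spec_decomp Bc dp dm U S"
begin

lemma sdf: "U \<in> carrier_mat K (dp+dm)" "S \<in> carrier_mat (dp+dm) (dp+dm)" "diagonal_mat S"
  "\<forall>i<dp. S $$ (i,i) > 0" "\<forall>i. dp \<le> i \<and> i < dp + dm \<longrightarrow> S $$ (i,i) < 0"
  "transpose_mat U * U = 1\<^sub>m (dp + dm)" "Bc = U * S * transpose_mat U" "1 \<le> dp"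
  using sd Bc unfolding spec_decomp_def by auto

lemma S_nz: "j < dp + dm \<Longrightarrow> S $$ (j,j) \<noteq> 0"
  using sdf(4,5) by (metis less_irrefl not_le)

lemma S_diag: "S = diag_of (dp+dm) (\<lambda>j. S $$ (j,j))"
  using sdf(2,3) unfolding diag_of_def diagonal_mat_def by (intro eq_matI) auto

lemma nu_eq: "nu_mat U S = U * diag_of (dp+dm) (\<lambda>j. sqrt \<bar>S $$ (j,j)\<bar>)"
  unfolding nu_mat_def diag_of_def using sdf(2) by (intro arg_cong2[of _ _ _ _ "(*)"] refl eq_matI) auto

lemma Nc: "nu_mat U S \<in> carrier_mat K (dp+dm)"
  unfolding nu_eq using sdf(1) by (auto simp: diag_of_def)

lemma N_entry: "a < K \<Longrightarrow> j < dp + dm \<Longrightarrow> nu_mat U S $$ (a,j) = U $$ (a,j) * sqrt \<bar>S $$ (j,j)\<bar>"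
  unfolding nu_eq by (rule mult_diag_entry[OF sdf(1)])

lemma Ipm_eq: "Ipm dp dm = diag_of (dp+dm) (\<lambda>j. if j < dp then 1 else -1)"
  unfolding Ipm_def diag_of_def by (intro eq_matI) auto

lemma F2: "Bc = nu_mat U S * Ipm dp dm * transpose_mat (nu_mat U S)"
proof (rule eq_matI)
  fix a b assume "a < dim_row (nu_mat U S * Ipm dp dm * transpose_mat (nu_mat U S))"
    "b < dim_col (nu_mat U S * Ipm dp dm * transpose_mat (nu_mat U S))"
  hence a: "a < K" and b: "b < K" using Nc by auto
  have "(nu_mat U S * Ipm dp dm * transpose_mat (nu_mat U S)) $$ (a,b)
    = (\<Sum>j<dp+dm. nu_mat U S $$ (a,j) * (if j < dp then 1 else -1) * nu_mat U S $$ (b,j))"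
    unfolding Ipm_eq by (rule diag_prod_entry[OF Nc Nc a b])
  also have "\<dots> = (\<Sum>j<dp+dm. U $$ (a,j) * S $$ (j,j) * U $$ (b,j))"
  proof (rule sum.cong)
    fix j assume j: "j \<in> {..<dp+dm}"
    have sq: "sqrt \<bar>S $$ (j,j)\<bar> * sqrt \<bar>S $$ (j,j)\<bar> = \<bar>S $$ (j,j)\<bar>" by simp
    have sg: "\<bar>S $$ (j,j)\<bar> * (if j < dp then 1 else -1) = S $$ (j,j)"
    proof (cases "j < dp")
      case False
      hence "S $$ (j,j) < 0" using sdf(5) j by auto
      thus ?thesis using False by simp
    qed (use sdf(4) in auto)
    show "nu_mat U S $$ (a,j) * (if j < dp then 1 else -1) * nu_mat U S $$ (b,j) = U $$ (a,j) * S $$ (j,j) * U $$ (b,j)"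
    proof -
      have jj: "j < dp + dm" using j by simp
      have "nu_mat U S $$ (a,j) * (if j < dp then 1 else -1) * nu_mat U S $$ (b,j)
          = U $$ (a,j) * U $$ (b,j) * ((sqrt \<bar>S $$ (j,j)\<bar> * sqrt \<bar>S $$ (j,j)\<bar>) * (if j < dp then 1 else -1))"
        unfolding N_entry[OF a jj] N_entry[OF b jj] by (simp only: mult_ac)
      also have "\<dots> = U $$ (a,j) * S $$ (j,j) * U $$ (b,j)" unfolding sq sg by (simp only: mult_ac)
      finally show ?thesis .
    qed
  qed simp
  also have "\<dots> = (U * diag_of (dp+dm) (\<lambda>j. S $$ (j,j)) * transpose_mat U) $$ (a,b)"
    by (rule diag_prod_entry[OF sdf(1) sdf(1) a b, symmetric])
  also have "\<dots> = Bc $$ (a,b)" using sdf(7) S_diag by simp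
  finally show "Bc $$ (a,b) = (nu_mat U S * Ipm dp dm * transpose_mat (nu_mat U S)) $$ (a,b)" by simp
qed (use Bc Nc in auto)


lemma Sqc: "diag_of (dp+dm) f \<in> carrier_mat (dp+dm) (dp+dm)" by (simp add: diag_of_def)

lemma nu_vec: "w \<in> carrier_vec (dp+dm) \<Longrightarrow> nu_mat U S *\<^sub>v w = U *\<^sub>v (diag_of (dp+dm) (\<lambda>j. sqrt \<bar>S $$ (j,j)\<bar>) *\<^sub>v w)"
  unfolding nu_eq by (rule assoc_mult_mat_vec[OF sdf(1) Sqc])

lemma UtU: "y \<in> carrier_vec (dp+dm) \<Longrightarrow> transpose_mat U *\<^sub>v (U *\<^sub>v y) = y"
  using sdf(1,6) by (metis assoc_mult_mat_vec carrier_matD(1) carrier_matD(2) carrier_matI index_transpose_mat(2,3) one_mult_mat_vec)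

lemma N_inj: assumes w: "w \<in> carrier_vec (dp+dm)" and z: "nu_mat U S *\<^sub>v w = 0\<^sub>v K"
  shows "w = 0\<^sub>v (dp+dm)"
proof (rule eq_vecI)
  let ?Sq = "diag_of (dp+dm) (\<lambda>j. sqrt \<bar>S $$ (j,j)\<bar>)"
  have "?Sq *\<^sub>v w = transpose_mat U *\<^sub>v (nu_mat U S *\<^sub>v w)"
    unfolding nu_vec[OF w] by (rule UtU[OF mult_mat_vec_carrier[OF Sqc w], symmetric])
  also have "\<dots> = 0\<^sub>v (dp+dm)" unfolding z using sdf(1) by auto
  finally have S0: "?Sq *\<^sub>v w = 0\<^sub>v (dp+dm)" .
  fix j assume "j < dim_vec (0\<^sub>v (dp+dm) :: real vec)"
  hence j: "j < dp+dm" by simp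
  have "sqrt \<bar>S $$ (j,j)\<bar> * w $ j = 0" using arg_cong[OF S0, of "\<lambda>v. v $ j"] diag_mult_vec[OF w j] j by simp
  thus "w $ j = 0\<^sub>v (dp+dm) $ j" using S_nz[OF j] j by simp
qed (use w in auto)

lemma R1: assumes w: "w \<in> carrier_vec (dp+dm)" shows "\<exists>z \<in> carrier_vec K. nu_mat U S *\<^sub>v w = Bc *\<^sub>v z"
proof -
  let ?Sq = "diag_of (dp+dm) (\<lambda>j. sqrt \<bar>S $$ (j,j)\<bar>)"
  define y where "y = diag_of (dp+dm) (\<lambda>j. sqrt \<bar>S $$ (j,j)\<bar> / S $$ (j,j)) *\<^sub>v w"
  have yc: "y \<in> carrier_vec (dp+dm)" unfolding y_def by (rule mult_mat_vec_carrier[OF Sqc w])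
  have Sy: "S *\<^sub>v y = ?Sq *\<^sub>v w"
  proof (rule eq_vecI)
    fix j assume "j < dim_vec (?Sq *\<^sub>v w)"
    hence j: "j < dp+dm" by (simp add: diag_of_def)
    have "(S *\<^sub>v y) $ j = S $$ (j,j) * y $ j" using diag_mult_vec[OF yc j] S_diag by metis
    also have "\<dots> = sqrt \<bar>S $$ (j,j)\<bar> * w $ j" unfolding y_def diag_mult_vec[OF w j] using S_nz[OF j] by simp
    finally show "(S *\<^sub>v y) $ j = (?Sq *\<^sub>v w) $ j" using diag_mult_vec[OF w j] by simp
  qed (use sdf(2) in \<open>auto simp: diag_of_def\<close>)
  have "Bc *\<^sub>v (U *\<^sub>v y) = U *\<^sub>v (S *\<^sub>v (transpose_mat U *\<^sub>v (U *\<^sub>v y)))"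
    by (subst sdf(7), rule assoc3[OF sdf(1) sdf(2)]) (use sdf(1) yc in auto)
  also have "\<dots> = nu_mat U S *\<^sub>v w" unfolding UtU[OF yc] Sy nu_vec[OF w] ..
  finally show ?thesis using sdf(1) yc by (intro bexI[of _ "U *\<^sub>v y"]) auto
qed

lemma R2: assumes z: "z \<in> carrier_vec K" shows "\<exists>w \<in> carrier_vec (dp+dm). Bc *\<^sub>v z = nu_mat U S *\<^sub>v w"
proof -
  have J: "Ipm dp dm \<in> carrier_mat (dp+dm) (dp+dm)" unfolding Ipm_def by auto
  have "Bc *\<^sub>v z = nu_mat U S *\<^sub>v (Ipm dp dm *\<^sub>v (transpose_mat (nu_mat U S) *\<^sub>v z))"
    by (subst F2, rule assoc3[OF Nc J]) (use Nc z in auto)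
  thus ?thesis using J Nc z by (intro bexI[of _ "Ipm dp dm *\<^sub>v (transpose_mat (nu_mat U S) *\<^sub>v z)"]) auto
qed

end

lemma diag_of_dims[simp]: "dim_row (diag_of n f) = n" "dim_col (diag_of n f) = n"
  by (simp_all add: diag_of_def)

lemma diag_of_carrier[simp]: "diag_of n f \<in> carrier_mat n n"
  by (simp add: diag_of_def)

definition Dw :: "real mat \<Rightarrow> (nat \<Rightarrow> real) \<Rightarrow> nat \<Rightarrow> nat \<Rightarrow> real \<Rightarrow> nat \<Rightarrow> real" where
  "Dw Bc ppi k l t i = ppi i * (t * (Bc $$ (k,i) * (1 - Bc $$ (k,i))) + (1 - t) * (Bc $$ (l,i) * (1 - Bc $$ (l,i))))"

definition yy :: "real mat \<Rightarrow> (nat \<Rightarrow> real) \<Rightarrow> nat \<Rightarrow> nat \<Rightarrow> nat \<Rightarrow> real" where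
  "yy Bc ppi k l i = ppi i * (Bc $$ (i,k) - Bc $$ (i,l))"

definition Phi :: "nat \<Rightarrow> real mat \<Rightarrow> (nat \<Rightarrow> real) \<Rightarrow> nat \<Rightarrow> nat \<Rightarrow> real \<Rightarrow> (nat \<Rightarrow> real) \<Rightarrow> real" where
  "Phi K Bc ppi k l t u = 2 * (\<Sum>i<K. u i * yy Bc ppi k l i) - (\<Sum>i<K. Dw Bc ppi k l t i * (u i)^2)"

definition qv :: "real mat \<Rightarrow> (nat \<Rightarrow> real) \<Rightarrow> nat \<Rightarrow> nat \<Rightarrow> real mat \<Rightarrow> nat \<Rightarrow> nat \<Rightarrow> real \<Rightarrow> real" where
  "qv B ppi dp dm nu k l t = (let x = row nu k - row nu l;
             St = t \<cdot>\<^sub>m Sigma_mat B ppi dp dm nu k + (1 - t) \<cdot>\<^sub>m Sigma_mat B ppi dp dm nu l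
         in x \<bullet> (minv St *\<^sub>v x))"

lemma C_kl_eq: "C_kl B ppi dp dm nu k l = (SUP t\<in>{0<..<1::real}. t * (1 - t) * qv B ppi dp dm nu k l t)"
  unfolding C_kl_def qv_def Let_def ..

lemma assoc5: fixes A B C D E :: "real mat"
  assumes A: "A \<in> carrier_mat n n" and B: "B \<in> carrier_mat n n" and C: "C \<in> carrier_mat n n"
    and D: "D \<in> carrier_mat n n" and E: "E \<in> carrier_mat n n" and v: "v \<in> carrier_vec n"
  shows "(A * B * C * D * E) *\<^sub>v v = A *\<^sub>v (B *\<^sub>v (C *\<^sub>v (D *\<^sub>v (E *\<^sub>v v))))"
proof -
  have "(A * B * C * D * E) *\<^sub>v v = (A * B * C * D) *\<^sub>v (E *\<^sub>v v)"
    by (rule assoc_mult_mat_vec[of _ n n]) (use A B C D E v in auto)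
  also have "\<dots> = (A * B * C) *\<^sub>v (D *\<^sub>v (E *\<^sub>v v))"
    by (rule assoc_mult_mat_vec[of _ n n]) (use A B C D E v in auto)
  also have "\<dots> = A *\<^sub>v (B *\<^sub>v (C *\<^sub>v (D *\<^sub>v (E *\<^sub>v v))))"
    by (rule assoc3[of _ n n _ n _ n]) (use A B C D E v in auto)
  finally show ?thesis .
qed

context
  fixes Bc U S :: "real mat" and K dp dm :: nat and ppi :: "nat \<Rightarrow> real" and k l :: nat and t :: real
  assumes Bc: "Bc \<in> carrier_mat K K" and sd: "spec_decomp Bc dp dm U S"
    and Bent: "\<forall>i<K. \<forall>j<K. 0 < Bc $$ (i,j) \<and> Bc $$ (i,j) < 1"
    and ppos: "\<forall>i<K. 0 < ppi i" and k: "k < K" and l: "l < K" and t0: "0 < t" and t1: "t < 1"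
begin

lemma Dw_pos: "i < K \<Longrightarrow> Dw Bc ppi k l t i > 0"
proof -
  assume i: "i < K"
  have a: "Bc $$ (k,i) * (1 - Bc $$ (k,i)) > 0" using Bent k i by simp
  have b: "Bc $$ (l,i) * (1 - Bc $$ (l,i)) > 0" using Bent l i by simp
  have "t * (Bc $$ (k,i) * (1 - Bc $$ (k,i))) + (1 - t) * (Bc $$ (l,i) * (1 - Bc $$ (l,i))) > 0"
    using a b t0 t1 by (simp add: add_pos_pos)
  thus ?thesis unfolding Dw_def using ppos i by simp
qed

lemma posdef_inj:
  assumes g: "\<And>i. i < K \<Longrightarrow> g i > 0" and w: "w \<in> carrier_vec (dp+dm)"
    and z: "(transpose_mat (nu_mat U S) * diag_of K g * nu_mat U S) *\<^sub>v w = 0\<^sub>v (dp+dm)"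
  shows "w = 0\<^sub>v (dp+dm)"
proof -
  let ?N = "nu_mat U S"
  have N: "?N \<in> carrier_mat K (dp+dm)" by (rule Nc[OF Bc sd])
  have "(\<Sum>i<K. g i * (?N *\<^sub>v w) $ i * (?N *\<^sub>v w) $ i) = w \<bullet> 0\<^sub>v (dp+dm)"
    using QF[OF N w w, of g] z by simp
  also have "\<dots> = 0" using w by simp
  finally have s0: "(\<Sum>i<K. g i * (?N *\<^sub>v w) $ i * (?N *\<^sub>v w) $ i) = 0" .
  have "\<forall>i\<in>{..<K}. g i * (?N *\<^sub>v w) $ i * (?N *\<^sub>v w) $ i = 0"
  proof (rule sum_nonneg_eq_0_iff[THEN iffD1, OF _ _ s0])
    fix i assume "i \<in> {..<K}"
    hence "g i > 0" using g by simp
    thus "0 \<le> g i * (?N *\<^sub>v w) $ i * (?N *\<^sub>v w) $ i"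
      by (metis mult.assoc mult_nonneg_nonneg less_imp_le zero_le_square)
  qed simp
  hence "?N *\<^sub>v w = 0\<^sub>v K" using g N by (intro eq_vecI) (auto, metis lessThan_iff less_irrefl mult_eq_0_iff)
  thus ?thesis by (rule N_inj[OF Bc sd w])
qed


lemma key:
  shows "(\<exists>w\<in>carrier_vec (dp+dm). qv Bc ppi dp dm (nu_mat U S) k l t = Phi K Bc ppi k l t (\<lambda>i. (nu_mat U S *\<^sub>v w) $ i))
     \<and> (\<forall>w\<in>carrier_vec (dp+dm). Phi K Bc ppi k l t (\<lambda>i. (nu_mat U S *\<^sub>v w) $ i) \<le> qv Bc ppi dp dm (nu_mat U S) k l t)"
proof -
  define d where "d = dp + dm"
  define N where "N = nu_mat U S"
  define J where "J = Ipm dp dm"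
  define Dl where "Dl = Delta_mat K ppi N"
  define Di where "Di = minv Dl"
  define gk where "gk = (\<lambda>i. ppi i * Bc $$ (k,i) * (1 - Bc $$ (k,i)))"
  define gl where "gl = (\<lambda>i. ppi i * Bc $$ (l,i) * (1 - Bc $$ (l,i)))"
  define Mk where "Mk = transpose_mat N * diag_of K gk * N"
  define Ml where "Ml = transpose_mat N * diag_of K gl * N"
  define Mt where "Mt = transpose_mat N * diag_of K (Dw Bc ppi k l t) * N"
  define Mi where "Mi = minv Mt"
  have Nc': "N \<in> carrier_mat K d" unfolding N_def d_def by (rule Nc[OF Bc sd])
  have dimN: "dim_row N = K" "dim_col N = d" using Nc' by auto
  have Jc: "J \<in> carrier_mat d d" unfolding J_def Ipm_def d_def by auto
  have Jd: "J = diag_of d (\<lambda>j. if j < dp then 1 else -1)" unfolding J_def d_def by (rule Ipm_eq[OF Bc sd])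
  have JJ: "\<And>v. v \<in> carrier_vec d \<Longrightarrow> J *\<^sub>v (J *\<^sub>v v) = v"
  proof -
    fix v :: "real vec" assume v: "v \<in> carrier_vec d"
    have Jv: "J *\<^sub>v v \<in> carrier_vec d" using Jc v by auto
    show "J *\<^sub>v (J *\<^sub>v v) = v"
      by (rule eq_vecI) (use v Jv in \<open>auto simp del: index_mult_mat_vec simp: Jd diag_mult_vec\<close>)
  qed
  have Jsym: "\<And>v w. v \<in> carrier_vec d \<Longrightarrow> w \<in> carrier_vec d \<Longrightarrow> v \<bullet> (J *\<^sub>v w) = (J *\<^sub>v v) \<bullet> w"
  proof -
    fix v w :: "real vec" assume v: "v \<in> carrier_vec d" and w: "w \<in> carrier_vec d"
    have Jv: "J *\<^sub>v v \<in> carrier_vec d" "J *\<^sub>v w \<in> carrier_vec d" using Jc v w by auto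
    show "v \<bullet> (J *\<^sub>v w) = (J *\<^sub>v v) \<bullet> w" unfolding scalar_prod_def using v w Jv
      by (intro sum.cong) (auto simp del: index_mult_mat_vec simp: Jd diag_mult_vec)
  qed
  have Dl_eq: "Dl = transpose_mat N * diag_of K ppi * N"
  proof (rule eq_matI)
    fix i j assume "i < dim_row (transpose_mat N * diag_of K ppi * N)" "j < dim_col (transpose_mat N * diag_of K ppi * N)"
    hence i: "i < d" and j: "j < d" using Nc' by auto
    show "Dl $$ (i,j) = (transpose_mat N * diag_of K ppi * N) $$ (i,j)"
      unfolding NtGN_entry[OF Nc' i j] Dl_def Delta_mat_def using i j dimN by (simp add: mult_ac)
  qed (use Nc' in \<open>auto simp: Dl_def Delta_mat_def\<close>)
  have Dlc: "Dl \<in> carrier_mat d d" unfolding Dl_eq using Nc' by (auto simp: diag_of_def)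
  have Dinv: "Dl * Di = 1\<^sub>m d \<and> Di * Dl = 1\<^sub>m d \<and> Di \<in> carrier_mat d d"
    unfolding Di_def
  proof (rule minv_exists[OF Dlc])
    fix v assume "v \<in> carrier_vec d" "Dl *\<^sub>v v = 0\<^sub>v d"
    thus "v = 0\<^sub>v d" unfolding Dl_eq N_def d_def using posdef_inj[of ppi v] ppos by auto
  qed
  have Dic: "Di \<in> carrier_mat d d" using Dinv by auto
  have DiDl: "\<And>v. v \<in> carrier_vec d \<Longrightarrow> Di *\<^sub>v (Dl *\<^sub>v v) = v"
    using Dinv Dlc by (metis assoc_mult_mat_vec one_mult_mat_vec)
  have Mtc: "Mt \<in> carrier_mat d d" unfolding Mt_def using Nc' by (auto simp: diag_of_def)
  have Mkc: "Mk \<in> carrier_mat d d" unfolding Mk_def using Nc' by (auto simp: diag_of_def)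
  have Mlc: "Ml \<in> carrier_mat d d" unfolding Ml_def using Nc' by (auto simp: diag_of_def)
  have Minv: "Mt * Mi = 1\<^sub>m d \<and> Mi * Mt = 1\<^sub>m d \<and> Mi \<in> carrier_mat d d"
    unfolding Mi_def
  proof (rule minv_exists[OF Mtc])
    fix v assume "v \<in> carrier_vec d" "Mt *\<^sub>v v = 0\<^sub>v d"
    thus "v = 0\<^sub>v d" unfolding Mt_def N_def d_def using posdef_inj[of "Dw Bc ppi k l t" v] Dw_pos by auto
  qed
  have Mic: "Mi \<in> carrier_mat d d" using Minv by auto
  have MtMi: "\<And>v. v \<in> carrier_vec d \<Longrightarrow> Mt *\<^sub>v (Mi *\<^sub>v v) = v"
    using Minv Mtc by (metis assoc_mult_mat_vec one_mult_mat_vec)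
  have Gc: "\<And>g. diag_of K g \<in> carrier_mat K K" by (simp add: diag_of_def)
  have NtGN: "\<And>g r. r \<in> carrier_vec d \<Longrightarrow> (transpose_mat N * diag_of K g * N) *\<^sub>v r = transpose_mat N *\<^sub>v (diag_of K g *\<^sub>v (N *\<^sub>v r))"
    by (rule assoc3) (use Nc' Gc in auto)
  have Mt_lin: "\<And>r. r \<in> carrier_vec d \<Longrightarrow> Mt *\<^sub>v r = t \<cdot>\<^sub>v (Mk *\<^sub>v r) + (1 - t) \<cdot>\<^sub>v (Ml *\<^sub>v r)"
  proof -
    fix r :: "real vec" assume r: "r \<in> carrier_vec d"
    have Nr: "N *\<^sub>v r \<in> carrier_vec K" using Nc' r by auto
    have "diag_of K (Dw Bc ppi k l t) *\<^sub>v (N *\<^sub>v r) = t \<cdot>\<^sub>v (diag_of K gk *\<^sub>v (N *\<^sub>v r)) + (1 - t) \<cdot>\<^sub>v (diag_of K gl *\<^sub>v (N *\<^sub>v r))"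
    proof (rule eq_vecI)
      fix i assume "i < dim_vec (t \<cdot>\<^sub>v (diag_of K gk *\<^sub>v (N *\<^sub>v r)) + (1 - t) \<cdot>\<^sub>v (diag_of K gl *\<^sub>v (N *\<^sub>v r)))"
      hence i: "i < K" by simp
      show "(diag_of K (Dw Bc ppi k l t) *\<^sub>v (N *\<^sub>v r)) $ i = (t \<cdot>\<^sub>v (diag_of K gk *\<^sub>v (N *\<^sub>v r)) + (1 - t) \<cdot>\<^sub>v (diag_of K gl *\<^sub>v (N *\<^sub>v r))) $ i"
        using i unfolding index_add_vec(1)[of i] index_smult_vec(1)[of i] 
        by (simp del: index_mult_mat_vec add: diag_mult_vec[OF Nr i] Dw_def gk_def gl_def algebra_simps)
    qed simp
    moreover have "transpose_mat N *\<^sub>v (t \<cdot>\<^sub>v (diag_of K gk *\<^sub>v (N *\<^sub>v r)) + (1 - t) \<cdot>\<^sub>v (diag_of K gl *\<^sub>v (N *\<^sub>v r)))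
      = t \<cdot>\<^sub>v (transpose_mat N *\<^sub>v (diag_of K gk *\<^sub>v (N *\<^sub>v r))) + (1 - t) \<cdot>\<^sub>v (transpose_mat N *\<^sub>v (diag_of K gl *\<^sub>v (N *\<^sub>v r)))"
      by (rule lin_vec[of _ d K]) (use Nc' Nr mult_mat_vec_carrier[OF diag_of_carrier Nr] in auto)
    ultimately show "Mt *\<^sub>v r = t \<cdot>\<^sub>v (Mk *\<^sub>v r) + (1 - t) \<cdot>\<^sub>v (Ml *\<^sub>v r)"
      unfolding Mt_def Mk_def Ml_def NtGN[OF r] by simp
  qed
  define Z where "Z = J * Dl * Mi * Dl * J"
  have Zc: "Z \<in> carrier_mat d d" unfolding Z_def using Jc Dlc Mic by auto
  have Zv: "\<And>v. v \<in> carrier_vec d \<Longrightarrow> Z *\<^sub>v v = J *\<^sub>v (Dl *\<^sub>v (Mi *\<^sub>v (Dl *\<^sub>v (J *\<^sub>v v))))"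
    unfolding Z_def by (rule assoc5[OF Jc Dlc Mic Dlc Jc])
  have Sig: "\<And>kk. Sigma_mat Bc ppi dp dm N kk = J * Di * (transpose_mat N * diag_of K (\<lambda>i. ppi i * Bc $$ (kk,i) * (1 - Bc $$ (kk,i))) * N) * Di * J"
  proof -
    fix kk
    have "mat (dim_col N) (dim_col N) (\<lambda>(i,j). \<Sum>l<K. ppi l * Bc $$ (kk,l) * (1 - Bc $$ (kk,l)) * N $$ (l,i) * N $$ (l,j))
      = transpose_mat N * diag_of K (\<lambda>i. ppi i * Bc $$ (kk,i) * (1 - Bc $$ (kk,i))) * N"
    proof (rule eq_matI)
      fix i j assume "i < dim_row (transpose_mat N * diag_of K (\<lambda>i. ppi i * Bc $$ (kk,i) * (1 - Bc $$ (kk,i))) * N)"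
        "j < dim_col (transpose_mat N * diag_of K (\<lambda>i. ppi i * Bc $$ (kk,i) * (1 - Bc $$ (kk,i))) * N)"
      hence i: "i < d" and j: "j < d" using Nc' by auto
      show "mat (dim_col N) (dim_col N) (\<lambda>(i,j). \<Sum>l<K. ppi l * Bc $$ (kk,l) * (1 - Bc $$ (kk,l)) * N $$ (l,i) * N $$ (l,j)) $$ (i,j)
        = (transpose_mat N * diag_of K (\<lambda>i. ppi i * Bc $$ (kk,i) * (1 - Bc $$ (kk,i))) * N) $$ (i,j)"
        unfolding NtGN_entry[OF Nc' i j] using i j dimN by (simp add: mult_ac)
    qed (use Nc' in auto)
    thus "?thesis kk" unfolding Sigma_mat_def Let_def J_def[symmetric] Di_def Dl_def using Bc by simp
  qed
  have Sk: "Sigma_mat Bc ppi dp dm N k = J * Di * Mk * Di * J" unfolding Sig Mk_def gk_def ..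
  have Sl: "Sigma_mat Bc ppi dp dm N l = J * Di * Ml * Di * J" unfolding Sig Ml_def gl_def ..
  define St where "St = t \<cdot>\<^sub>m Sigma_mat Bc ppi dp dm N k + (1 - t) \<cdot>\<^sub>m Sigma_mat Bc ppi dp dm N l"
  have Skc: "J * Di * Mk * Di * J \<in> carrier_mat d d" using Jc Dic Mkc by auto
  have Slc: "J * Di * Ml * Di * J \<in> carrier_mat d d" using Jc Dic Mlc by auto
  have Stc: "St \<in> carrier_mat d d" unfolding St_def Sk Sl using Skc Slc by auto
  have StZ: "St * Z = 1\<^sub>m d"
  proof (rule mat_eq_by_units[of _ d d])
    fix i assume i: "i < d"
    let ?e = "unit_vec d i"
    have e: "?e \<in> carrier_vec d" by simp
    define r where "r = Mi *\<^sub>v (Dl *\<^sub>v (J *\<^sub>v ?e))"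
    have rc: "r \<in> carrier_vec d" unfolding r_def using Mic Dlc Jc by auto
    have Ze: "Z *\<^sub>v ?e = J *\<^sub>v (Dl *\<^sub>v r)" unfolding Zv[OF e] r_def ..
    have Zec: "Z *\<^sub>v ?e \<in> carrier_vec d" using Zc by auto
    have inner: "Di *\<^sub>v (J *\<^sub>v (Z *\<^sub>v ?e)) = r"
      unfolding Ze using JJ DiDl Dlc rc by auto
    have "St *\<^sub>v (Z *\<^sub>v ?e) = t \<cdot>\<^sub>v ((J * Di * Mk * Di * J) *\<^sub>v (Z *\<^sub>v ?e)) + (1 - t) \<cdot>\<^sub>v ((J * Di * Ml * Di * J) *\<^sub>v (Z *\<^sub>v ?e))"
      unfolding St_def Sk Sl using Skc Slc Zec
      by (simp add: add_mult_distrib_mat_vec[of _ d d] smult_mat_vec[of _ d d])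
    also have "\<dots> = t \<cdot>\<^sub>v (J *\<^sub>v (Di *\<^sub>v (Mk *\<^sub>v r))) + (1 - t) \<cdot>\<^sub>v (J *\<^sub>v (Di *\<^sub>v (Ml *\<^sub>v r)))"
      unfolding assoc5[OF Jc Dic Mkc Dic Jc Zec] assoc5[OF Jc Dic Mlc Dic Jc Zec] inner ..
    also have "\<dots> = J *\<^sub>v (Di *\<^sub>v (t \<cdot>\<^sub>v (Mk *\<^sub>v r) + (1 - t) \<cdot>\<^sub>v (Ml *\<^sub>v r)))"
      using Jc Dic Mkc Mlc rc by (simp add: lin_vec[of _ d d])
    also have "\<dots> = J *\<^sub>v (Di *\<^sub>v (Mt *\<^sub>v r))" unfolding Mt_lin[OF rc] ..
    also have "\<dots> = J *\<^sub>v (Di *\<^sub>v (Dl *\<^sub>v (J *\<^sub>v ?e)))" unfolding r_def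
      using MtMi[of "Dl *\<^sub>v (J *\<^sub>v ?e)"] Dlc Jc by simp
    also have "\<dots> = ?e" using DiDl JJ Jc by simp
    finally show "(St * Z) *\<^sub>v ?e = 1\<^sub>m d *\<^sub>v ?e" using Stc Zc by simp
  qed (use Stc Zc in auto)
  have minvSt: "minv St = Z" by (rule minv_unique[OF Stc Zc StZ])
  define x where "x = row N k - row N l"
  define ez :: "real vec" where "ez = unit_vec K k - unit_vec K l"
  have ezc: "ez \<in> carrier_vec K" unfolding ez_def by simp
  have xc: "x \<in> carrier_vec d" unfolding x_def using Nc' k l by auto
  have x_eq: "x = transpose_mat N *\<^sub>v ez"
  proof (rule eq_vecI)
    fix j assume "j < dim_vec (transpose_mat N *\<^sub>v ez)"
    hence j: "j < d" using Nc' by simp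
    have "(transpose_mat N *\<^sub>v ez) $ j = col N j \<bullet> ez" using j Nc' by simp
    also have "\<dots> = col N j \<bullet> unit_vec K k - col N j \<bullet> unit_vec K l"
      unfolding ez_def by (rule scalar_prod_minus_distrib[of _ K]) (use Nc' j in auto)
    also have "\<dots> = N $$ (k,j) - N $$ (l,j)" using k l j Nc' by simp
    finally show "x $ j = (transpose_mat N *\<^sub>v ez) $ j" unfolding x_def using j Nc' k l by simp
  qed (use xc Nc' in auto)
  define yvec where "yvec = vec K (yy Bc ppi k l)"
  have yc: "yvec \<in> carrier_vec K" unfolding yvec_def by simp
  define g where "g = Dl *\<^sub>v (J *\<^sub>v x)"
  have gc: "g \<in> carrier_vec d" unfolding g_def using Dlc Jc xc by auto
  have Bez: "Bc *\<^sub>v ez = N *\<^sub>v (J *\<^sub>v x)"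
    unfolding x_eq J_def N_def by (subst F2[OF Bc sd], rule assoc3) (use Nc[OF Bc sd] ezc in \<open>auto simp: Ipm_def\<close>)
  have PiBez: "diag_of K ppi *\<^sub>v (Bc *\<^sub>v ez) = yvec"
  proof (rule eq_vecI)
    fix i assume "i < dim_vec yvec"
    hence i: "i < K" unfolding yvec_def by simp
    have "(Bc *\<^sub>v ez) $ i = row Bc i \<bullet> unit_vec K k - row Bc i \<bullet> unit_vec K l"
      unfolding ez_def using i Bc by (simp add: scalar_prod_minus_distrib[of _ K])
    also have "\<dots> = Bc $$ (i,k) - Bc $$ (i,l)" using i k l Bc by simp
    finally show "(diag_of K ppi *\<^sub>v (Bc *\<^sub>v ez)) $ i = yvec $ i"
      using diag_mult_vec[of "Bc *\<^sub>v ez" K i ppi] i Bc ezc unfolding yvec_def yy_def by simp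
  qed (use yc Gc in auto)
  have g_eq: "g = transpose_mat N *\<^sub>v yvec"
    unfolding g_def Dl_eq NtGN[OF mult_mat_vec_carrier[OF Jc xc]] Bez[symmetric] PiBez ..
  define h where "h = Mi *\<^sub>v g"
  have hc: "h \<in> carrier_vec d" unfolding h_def using Mic gc by auto
  have Mth: "Mt *\<^sub>v h = g" unfolding h_def by (rule MtMi[OF gc])
  have Jxc: "J *\<^sub>v x \<in> carrier_vec d" using Jc xc by auto
  have Dlsym: "\<And>a b. a \<in> carrier_vec d \<Longrightarrow> b \<in> carrier_vec d \<Longrightarrow> a \<bullet> (Dl *\<^sub>v b) = b \<bullet> (Dl *\<^sub>v a)"
    unfolding Dl_eq using QF[OF Nc'] by (simp add: mult_ac)
  have Mtsym: "\<And>a b. a \<in> carrier_vec d \<Longrightarrow> b \<in> carrier_vec d \<Longrightarrow> a \<bullet> (Mt *\<^sub>v b) = b \<bullet> (Mt *\<^sub>v a)"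
    unfolding Mt_def using QF[OF Nc'] by (simp add: mult_ac)
  have q_eq: "qv Bc ppi dp dm N k l t = h \<bullet> g"
  proof -
    have "qv Bc ppi dp dm N k l t = x \<bullet> (Z *\<^sub>v x)"
      unfolding qv_def Let_def x_def[symmetric] St_def[symmetric] minvSt ..
    also have "\<dots> = x \<bullet> (J *\<^sub>v (Dl *\<^sub>v h))" unfolding Zv[OF xc] h_def g_def ..
    also have "\<dots> = (J *\<^sub>v x) \<bullet> (Dl *\<^sub>v h)" by (rule Jsym[OF xc]) (use Dlc hc in auto)
    also have "\<dots> = h \<bullet> g" unfolding g_def by (rule Dlsym[OF Jxc hc])
    finally show ?thesis .
  qed
  have Phi_eq: "\<And>w. w \<in> carrier_vec d \<Longrightarrow> Phi K Bc ppi k l t (\<lambda>i. (N *\<^sub>v w) $ i) = 2 * (w \<bullet> g) - w \<bullet> (Mt *\<^sub>v w)"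
  proof -
    fix w :: "real vec" assume w: "w \<in> carrier_vec d"
    have "(\<Sum>i<K. (N *\<^sub>v w) $ i * yy Bc ppi k l i) = (N *\<^sub>v w) \<bullet> yvec"
      unfolding scalar_prod_def yvec_def by (simp add: atLeast0LessThan)
    also have "\<dots> = w \<bullet> g" unfolding g_eq by (rule tr_dot[OF Nc' w yc, symmetric])
    finally have a: "(\<Sum>i<K. (N *\<^sub>v w) $ i * yy Bc ppi k l i) = w \<bullet> g" .
    have b: "(\<Sum>i<K. Dw Bc ppi k l t i * ((N *\<^sub>v w) $ i)^2) = w \<bullet> (Mt *\<^sub>v w)"
      unfolding Mt_def QF[OF Nc' w w] by (simp add: power2_eq_square mult_ac)
    show "Phi K Bc ppi k l t (\<lambda>i. (N *\<^sub>v w) $ i) = 2 * (w \<bullet> g) - w \<bullet> (Mt *\<^sub>v w)"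
      unfolding Phi_def a b ..
  qed
  have partA: "qv Bc ppi dp dm N k l t = Phi K Bc ppi k l t (\<lambda>i. (N *\<^sub>v h) $ i)"
    unfolding Phi_eq[OF hc] q_eq Mth using comm_scalar_prod[OF hc gc] by simp
  have partB: "\<forall>w\<in>carrier_vec d. Phi K Bc ppi k l t (\<lambda>i. (N *\<^sub>v w) $ i) \<le> qv Bc ppi dp dm N k l t"
  proof
    fix w :: "real vec" assume w: "w \<in> carrier_vec d"
    let ?a = "\<lambda>i. (N *\<^sub>v w) $ i" and ?b = "\<lambda>i. (N *\<^sub>v h) $ i" and ?D = "Dw Bc ppi k l t"
    have nn: "0 \<le> (\<Sum>i<K. ?D i * (?a i - ?b i)^2)"
    proof (rule sum_nonneg)
      fix i assume "i \<in> {..<K}"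
      hence "?D i > 0" using Dw_pos by simp
      thus "0 \<le> ?D i * (?a i - ?b i)^2" by simp
    qed
    have expand: "(\<Sum>i<K. ?D i * (?a i - ?b i)^2) = (\<Sum>i<K. ?D i * ?a i * ?a i) - 2 * (\<Sum>i<K. ?D i * ?a i * ?b i) + (\<Sum>i<K. ?D i * ?b i * ?b i)"
      by (simp add: power2_diff algebra_simps sum.distrib sum_subtractf sum_distrib_left power2_eq_square)
    have e1: "(\<Sum>i<K. ?D i * ?a i * ?a i) = w \<bullet> (Mt *\<^sub>v w)" unfolding Mt_def QF[OF Nc' w w] ..
    have e2: "(\<Sum>i<K. ?D i * ?a i * ?b i) = w \<bullet> g" unfolding Mth[symmetric] Mt_def QF[OF Nc' w hc] ..
    have e3: "(\<Sum>i<K. ?D i * ?b i * ?b i) = h \<bullet> g" unfolding Mth[symmetric] Mt_def QF[OF Nc' hc hc] ..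
    show "Phi K Bc ppi k l t ?a \<le> qv Bc ppi dp dm N k l t"
      using nn unfolding expand e1 e2 e3 Phi_eq[OF w] q_eq by simp
  qed
  show ?thesis using partA partB hc unfolding N_def d_def by blast
qed

end

lemma Phi_scale:
  fixes B :: "real mat"
  assumes B: "B \<in> carrier_mat K K" and Bent: "\<forall>i<K. \<forall>j<K. 0 < B $$ (i,j) \<and> B $$ (i,j) < 1"
    and ppos: "\<forall>i<K. 0 < ppi i" and c: "0 < c" "c \<le> c'" and k: "k < K" and l: "l < K"
    and t: "0 < t" "t < 1"
  shows "(c' / c) * Phi K (c \<cdot>\<^sub>m B) ppi k l t u \<le> Phi K (c' \<cdot>\<^sub>m B) ppi k l t u"
proof -
  have y: "\<And>i. i < K \<Longrightarrow> yy (c' \<cdot>\<^sub>m B) ppi k l i = (c' / c) * yy (c \<cdot>\<^sub>m B) ppi k l i"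
    unfolding yy_def using B k l c by (auto simp: field_simps)
  have D: "\<And>i. i < K \<Longrightarrow> Dw (c' \<cdot>\<^sub>m B) ppi k l t i * (u i)^2 \<le> (c' / c) * (Dw (c \<cdot>\<^sub>m B) ppi k l t i * (u i)^2)"
  proof -
    fix i assume i: "i < K"
    have bk: "0 < B $$ (k,i)" and bl: "0 < B $$ (l,i)" using Bent k l i by auto
    have "t * (c' * B $$ (k,i) * (1 - c' * B $$ (k,i))) \<le> t * (c' * B $$ (k,i) * (1 - c * B $$ (k,i)))"
      using t c bk by (intro mult_left_mono) (auto intro!: mult_left_mono mult_right_mono)
    moreover have "(1 - t) * (c' * B $$ (l,i) * (1 - c' * B $$ (l,i))) \<le> (1 - t) * (c' * B $$ (l,i) * (1 - c * B $$ (l,i)))"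
      using t c bl by (intro mult_left_mono) (auto intro!: mult_left_mono mult_right_mono)
    ultimately have "Dw (c' \<cdot>\<^sub>m B) ppi k l t i \<le> ppi i * (t * (c' * B $$ (k,i) * (1 - c * B $$ (k,i))) + (1 - t) * (c' * B $$ (l,i) * (1 - c * B $$ (l,i))))"
      unfolding Dw_def using B k l i ppos by (auto intro!: mult_left_mono)
    also have "\<dots> = (c' / c) * Dw (c \<cdot>\<^sub>m B) ppi k l t i"
      unfolding Dw_def using B k l i c by (simp add: field_simps)
    finally have "Dw (c' \<cdot>\<^sub>m B) ppi k l t i \<le> (c' / c) * Dw (c \<cdot>\<^sub>m B) ppi k l t i" .
    thus "Dw (c' \<cdot>\<^sub>m B) ppi k l t i * (u i)^2 \<le> (c' / c) * (Dw (c \<cdot>\<^sub>m B) ppi k l t i * (u i)^2)"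
      by (metis mult.assoc mult_right_mono zero_le_power2)
  qed
  have "(c' / c) * Phi K (c \<cdot>\<^sub>m B) ppi k l t u
     = 2 * (\<Sum>i<K. u i * ((c' / c) * yy (c \<cdot>\<^sub>m B) ppi k l i)) - (\<Sum>i<K. (c' / c) * (Dw (c \<cdot>\<^sub>m B) ppi k l t i * (u i)^2))"
    unfolding Phi_def by (simp add: sum_distrib_left right_diff_distrib mult_ac)
  also have "\<dots> \<le> 2 * (\<Sum>i<K. u i * yy (c' \<cdot>\<^sub>m B) ppi k l i) - (\<Sum>i<K. Dw (c' \<cdot>\<^sub>m B) ppi k l t i * (u i)^2)"
    using sum_mono[of "{..<K}", OF D] y by simp
  finally show ?thesis unfolding Phi_def .
qed

lemma Phi_bound:
  assumes Dp: "\<And>i. i < K \<Longrightarrow> Dw Bc ppi k l t i > 0"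
  shows "Phi K Bc ppi k l t u \<le> (\<Sum>i<K. (yy Bc ppi k l i)^2 / Dw Bc ppi k l t i)"
proof -
  have "\<And>i. i < K \<Longrightarrow> 2 * (u i * yy Bc ppi k l i) - Dw Bc ppi k l t i * (u i)^2 \<le> (yy Bc ppi k l i)^2 / Dw Bc ppi k l t i"
  proof -
    fix i assume i: "i < K"
    define D where "D = Dw Bc ppi k l t i"
    define y where "y = yy Bc ppi k l i"
    have D0: "D > 0" unfolding D_def using Dp i .
    have "0 \<le> (D * u i - y)^2 / D" using D0 by simp
    also have "(D * u i - y)^2 / D = D * (u i)^2 - 2 * (u i * y) + y^2 / D"
      using D0 by (simp add: power2_diff field_simps power2_eq_square)
    finally show "2 * (u i * yy Bc ppi k l i) - Dw Bc ppi k l t i * (u i)^2 \<le> (yy Bc ppi k l i)^2 / Dw Bc ppi k l t i"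
      unfolding D_def[symmetric] y_def[symmetric] by simp
  qed
  hence "(\<Sum>i<K. 2 * (u i * yy Bc ppi k l i) - Dw Bc ppi k l t i * (u i)^2) \<le> (\<Sum>i<K. (yy Bc ppi k l i)^2 / Dw Bc ppi k l t i)"
    by (intro sum_mono) auto
  thus ?thesis unfolding Phi_def by (simp add: sum_subtractf sum_distrib_left)
qed


lemma smB_props:
  fixes B :: "real mat"
  assumes B: "B \<in> carrier_mat K K" and Bent: "\<forall>i<K. \<forall>j<K. 0 < B $$ (i,j) \<and> B $$ (i,j) < 1"
    and c: "0 < c" "c \<le> 1"
  shows "c \<cdot>\<^sub>m B \<in> carrier_mat K K" "\<forall>i<K. \<forall>j<K. 0 < (c \<cdot>\<^sub>m B) $$ (i,j) \<and> (c \<cdot>\<^sub>m B) $$ (i,j) < 1"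
proof -
  show "c \<cdot>\<^sub>m B \<in> carrier_mat K K" using B by simp
  show "\<forall>i<K. \<forall>j<K. 0 < (c \<cdot>\<^sub>m B) $$ (i,j) \<and> (c \<cdot>\<^sub>m B) $$ (i,j) < 1"
  proof (intro allI impI)
    fix i j assume i: "i < K" and j: "j < K"
    have b0: "0 < B $$ (i,j)" and b1: "B $$ (i,j) < 1" using Bent i j by auto
    have cb: "c * B $$ (i,j) \<le> B $$ (i,j)" using mult_right_mono[of c 1 "B $$ (i,j)"] c b0 by simp
    have "c * B $$ (i,j) < 1" using cb b1 by linarith
    moreover have "0 < c * B $$ (i,j)" using c b0 by simp
    ultimately show "0 < (c \<cdot>\<^sub>m B) $$ (i,j) \<and> (c \<cdot>\<^sub>m B) $$ (i,j) < 1" using B i j by auto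
  qed
qed

lemma pair_compare:
  fixes B :: "real mat"
  assumes B: "B \<in> carrier_mat K K" and Bent: "\<forall>i<K. \<forall>j<K. 0 < B $$ (i,j) \<and> B $$ (i,j) < 1"
    and symB: "transpose_mat B = B" and rows: "\<forall>i<K. \<forall>j<K. i \<noteq> j \<longrightarrow> row B i \<noteq> row B j"
    and ppos: "\<forall>i<K. 0 < ppi i" and c: "0 < c" "c < c'" "c' \<le> 1"
    and sd: "spec_decomp (c \<cdot>\<^sub>m B) dp dm U S" and sd': "spec_decomp (c' \<cdot>\<^sub>m B) dp' dm' U' S'"
    and k: "k < K" and l: "l < K" and kl: "k \<noteq> l"
  shows "C_kl (c \<cdot>\<^sub>m B) ppi dp dm (nu_mat U S) k l < C_kl (c' \<cdot>\<^sub>m B) ppi dp' dm' (nu_mat U' S') k l"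
proof -
  let ?Bc = "c \<cdot>\<^sub>m B" and ?Bc' = "c' \<cdot>\<^sub>m B"
  let ?N = "nu_mat U S" and ?N' = "nu_mat U' S'"
  have c1: "c \<le> 1" using c by simp
  note P = smB_props[OF B Bent c(1) c1]
  note P' = smB_props[OF B Bent _ c(3)]
  have c'0: "0 < c'" using c by simp
  note P' = P'[OF c'0]
  define f where "f = (\<lambda>t. t * (1 - t) * qv ?Bc ppi dp dm ?N k l t)"
  define f' where "f' = (\<lambda>t. t * (1 - t) * qv ?Bc' ppi dp' dm' ?N' k l t)"
  have Cf: "C_kl ?Bc ppi dp dm ?N k l = (SUP t\<in>{0<..<1}. f t)" unfolding C_kl_eq f_def ..
  have Cf': "C_kl ?Bc' ppi dp' dm' ?N' k l = (SUP t\<in>{0<..<1}. f' t)" unfolding C_kl_eq f'_def ..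
  note key1 = key[OF P(1) sd P(2) ppos k l]
  note key2 = key[OF P'(1) sd' P'(2) ppos k l]
  have Nc1: "?N \<in> carrier_mat K (dp+dm)" by (rule Nc[OF P(1) sd])
  have Nc2: "?N' \<in> carrier_mat K (dp'+dm')" by (rule Nc[OF P'(1) sd'])
  have cmp: "\<And>t. t \<in> {0<..<1} \<Longrightarrow> (c' / c) * f t \<le> f' t"
  proof -
    fix t :: real assume "t \<in> {0<..<1}"
    hence t: "0 < t" "t < 1" by auto
    obtain w where w: "w \<in> carrier_vec (dp+dm)"
      and qw: "qv ?Bc ppi dp dm ?N k l t = Phi K ?Bc ppi k l t (\<lambda>i. (?N *\<^sub>v w) $ i)"
      using key1[OF t] by blast
    obtain z where z: "z \<in> carrier_vec K" and Nz: "?N *\<^sub>v w = ?Bc *\<^sub>v z" using R1[OF P(1) sd w] by blast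
    obtain w' where w': "w' \<in> carrier_vec (dp'+dm')" and w'e: "?Bc' *\<^sub>v ((c / c') \<cdot>\<^sub>v z) = ?N' *\<^sub>v w'"
      using R2[OF P'(1) sd', of "(c / c') \<cdot>\<^sub>v z"] z by auto
    have "?Bc *\<^sub>v z = ?Bc' *\<^sub>v ((c / c') \<cdot>\<^sub>v z)"
      using B z c by (simp add: smult_mat_vec[OF B] mult_mat_vec[OF B] smult_smult_assoc)
    hence NN: "?N *\<^sub>v w = ?N' *\<^sub>v w'" using Nz w'e by simp
    have "(c' / c) * qv ?Bc ppi dp dm ?N k l t \<le> Phi K ?Bc' ppi k l t (\<lambda>i. (?N *\<^sub>v w) $ i)"
      unfolding qw by (rule Phi_scale[OF B Bent ppos c(1) _ k l t]) (use c in simp)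
    also have "\<dots> \<le> qv ?Bc' ppi dp' dm' ?N' k l t" unfolding NN using key2[OF t] w' by blast
    finally have "(c' / c) * qv ?Bc ppi dp dm ?N k l t \<le> qv ?Bc' ppi dp' dm' ?N' k l t" .
    moreover have "0 \<le> t * (1 - t)" using t by simp
    ultimately show "(c' / c) * f t \<le> f' t" unfolding f_def f'_def
      by (metis mult_left_mono mult.left_commute)
  qed
  define a where "a = (\<lambda>j i. (c' \<cdot>\<^sub>m B) $$ (j,i) * (1 - (c' \<cdot>\<^sub>m B) $$ (j,i)))"
  define Mb where "Mb = (\<Sum>i<K. (yy ?Bc' ppi k l i)^2 / (ppi i * min (a k i) (a l i)))"
  have bnd: "\<And>t. t \<in> {0<..<1} \<Longrightarrow> f' t \<le> Mb"
  proof -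
    fix t :: real assume "t \<in> {0<..<1}"
    hence t: "0 < t" "t < 1" by auto
    have Dp: "\<And>i. i < K \<Longrightarrow> Dw ?Bc' ppi k l t i > 0" by (rule Dw_pos[OF P'(1) sd' P'(2) ppos k l t])
    obtain w where w: "w \<in> carrier_vec (dp'+dm')"
      and qw: "qv ?Bc' ppi dp' dm' ?N' k l t = Phi K ?Bc' ppi k l t (\<lambda>i. (?N' *\<^sub>v w) $ i)"
      using key2[OF t] by blast
    have "qv ?Bc' ppi dp' dm' ?N' k l t \<le> (\<Sum>i<K. (yy ?Bc' ppi k l i)^2 / Dw ?Bc' ppi k l t i)"
      unfolding qw by (rule Phi_bound[OF Dp])
    also have "\<dots> \<le> Mb" unfolding Mb_def
    proof (rule sum_mono)
      fix i assume i: "i \<in> {..<K}"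
      have ak: "a k i > 0" and al: "a l i > 0" unfolding a_def using P'(2) k l i by auto
      have "ppi i * min (a k i) (a l i) \<le> Dw ?Bc' ppi k l t i"
      proof -
        have "min (a k i) (a l i) \<le> t * a k i + (1 - t) * a l i"
        proof -
          have "t * min (a k i) (a l i) \<le> t * a k i" using t by (intro mult_left_mono) auto
          moreover have "(1 - t) * min (a k i) (a l i) \<le> (1 - t) * a l i" using t by (intro mult_left_mono) auto
          ultimately show ?thesis by (simp add: algebra_simps)
        qed
        thus ?thesis unfolding Dw_def a_def using ppos i by (intro mult_left_mono) auto
      qed
      moreover have "0 < ppi i * min (a k i) (a l i)" using ppos i ak al by simp
      ultimately show "(yy ?Bc' ppi k l i)^2 / Dw ?Bc' ppi k l t i \<le> (yy ?Bc' ppi k l i)^2 / (ppi i * min (a k i) (a l i))"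
        by (intro divide_left_mono) auto
    qed
    finally have q1: "qv ?Bc' ppi dp' dm' ?N' k l t \<le> Mb" .
    have q0: "0 \<le> qv ?Bc' ppi dp' dm' ?N' k l t"
    proof -
      have "Phi K ?Bc' ppi k l t (\<lambda>i. (?N' *\<^sub>v 0\<^sub>v (dp'+dm')) $ i) \<le> qv ?Bc' ppi dp' dm' ?N' k l t"
        using key2[OF t] zero_carrier_vec[of "dp'+dm'"] by blast
      moreover have "Phi K ?Bc' ppi k l t (\<lambda>i. (?N' *\<^sub>v 0\<^sub>v (dp'+dm')) $ i) = 0"
        unfolding Phi_def using Nc2 by (simp add: scalar_prod_def)
      ultimately show ?thesis by simp
    qed
    have "t * (1 - t) \<le> t * 1" by (rule mult_left_mono) (use t in auto)
    hence "t * (1 - t) \<le> 1" using t by linarith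
    moreover have "0 \<le> t * (1 - t)" using t by simp
    ultimately have "f' t \<le> qv ?Bc' ppi dp' dm' ?N' k l t" unfolding f'_def using q0
      by (metis mult_left_le_one_le mult.commute mult_right_le_one_le)
    thus "f' t \<le> Mb" using q1 by simp
  qed
  have bdd': "bdd_above (f' ` {0<..<1})" using bnd by (intro bdd_aboveI2) auto
  have fle: "\<And>t. t \<in> {0<..<1} \<Longrightarrow> f t \<le> (c / c') * (SUP t\<in>{0<..<1}. f' t)"
  proof -
    fix t :: real assume t: "t \<in> {0<..<1}"
    have "f t = (c / c') * ((c' / c) * f t)" using c by simp
    also have "\<dots> \<le> (c / c') * f' t" using cmp[OF t] c by (intro mult_left_mono) auto
    also have "\<dots> \<le> (c / c') * (SUP t\<in>{0<..<1}. f' t)"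
      using cSUP_upper[OF t bdd'] c by (intro mult_left_mono) auto
    finally show "f t \<le> (c / c') * (SUP t\<in>{0<..<1}. f' t)" .
  qed
  have bdd: "bdd_above (f ` {0<..<1})" using fle by (intro bdd_aboveI2) auto
  have fpos: "f (1/2) > 0"
  proof -
    have t: "(0::real) < 1/2" "(1::real)/2 < 1" by auto
    obtain i0 where i0: "i0 < K" "B $$ (k,i0) \<noteq> B $$ (l,i0)"
    proof -
      have "row B k \<noteq> row B l" using rows k l kl by auto
      then obtain i0 where "i0 < K" "row B k $ i0 \<noteq> row B l $ i0" using B
        by (metis carrier_matD(2) eq_vecI index_row(2))
      thus ?thesis using that B k l by auto
    qed
    define v where "v = (\<lambda>i. ?Bc $$ (i,k) - ?Bc $$ (i,l))"
    have vi0: "v i0 \<noteq> 0"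
    proof -
      have "B $$ (i0,k) = B $$ (k,i0)" "B $$ (i0,l) = B $$ (l,i0)" using symB B i0 k l
        by (metis carrier_matD index_transpose_mat(1))+
      thus ?thesis unfolding v_def using B i0 k l c by auto
    qed
    define P where "P = (\<Sum>i<K. ppi i * (v i)^2)"
    define Q where "Q = (\<Sum>i<K. Dw ?Bc ppi k l (1/2) i * (v i)^2)"
    have Pp: "P > 0" unfolding P_def
    proof (rule sum_pos2[of _ i0])
      show "0 < ppi i0 * (v i0)^2" using i0 vi0 ppos by simp
      show "\<And>i. i \<in> {..<K} \<Longrightarrow> 0 \<le> ppi i * (v i)^2"
      proof -
        fix i assume "i \<in> {..<K}"
        hence "0 < ppi i" using ppos by simp
        thus "0 \<le> ppi i * (v i)^2" by simp
      qed
    qed (use i0 in auto)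
    have Qn: "Q \<ge> 0" unfolding Q_def
    proof (rule sum_nonneg)
      fix i assume "i \<in> {..<K}"
      hence "0 < Dw ?Bc ppi k l (1/2) i" using Dw_pos[OF P(1) sd P(2) ppos k l t] by simp
      thus "0 \<le> Dw ?Bc ppi k l (1/2) i * (v i)^2" by simp
    qed
    define e where "e = P / (Q + 1)"
    have ep: "e > 0" unfolding e_def using Pp Qn by simp
    define z :: "real vec" where "z = e \<cdot>\<^sub>v (unit_vec K k - unit_vec K l)"
    have zc: "z \<in> carrier_vec K" unfolding z_def by simp
    obtain w where w: "w \<in> carrier_vec (dp+dm)" and Bz: "?Bc *\<^sub>v z = ?N *\<^sub>v w"
      using R2[OF P(1) sd zc] by blast
    have Nw: "\<And>i. i < K \<Longrightarrow> (?N *\<^sub>v w) $ i = e * v i"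
    proof -
      fix i assume i: "i < K"
      have "(?Bc *\<^sub>v z) $ i = row ?Bc i \<bullet> z" using i B by simp
      also have "\<dots> = e * (row ?Bc i \<bullet> unit_vec K k - row ?Bc i \<bullet> unit_vec K l)"
        unfolding z_def using i B by (simp add: scalar_prod_minus_distrib[of _ K])
      also have "\<dots> = e * v i" unfolding v_def using i k l B by simp
      finally show "(?N *\<^sub>v w) $ i = e * v i" using Bz by simp
    qed
    have "Phi K ?Bc ppi k l (1/2) (\<lambda>i. (?N *\<^sub>v w) $ i) = 2 * e * P - e^2 * Q"
    proof -
      have s1: "(\<Sum>i<K. (?N *\<^sub>v w) $ i * yy ?Bc ppi k l i) = e * P"
        unfolding P_def yy_def v_def[symmetric] sum_distrib_left
        by (rule sum.cong) (auto simp: Nw power2_eq_square v_def)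
      have s2: "(\<Sum>i<K. Dw ?Bc ppi k l (1/2) i * ((?N *\<^sub>v w) $ i)^2) = e^2 * Q"
        unfolding Q_def sum_distrib_left
        by (rule sum.cong) (auto simp: Nw power2_eq_square v_def)
      show ?thesis unfolding Phi_def s1 s2 by simp
    qed
    also have "\<dots> = e * (2 * P - e * Q)" by (simp add: power2_eq_square algebra_simps)
    also have "\<dots> > 0"
    proof -
      have "e * Q < P" unfolding e_def using Pp Qn by (simp add: field_simps)
      thus ?thesis using ep Pp by simp
    qed
    finally have "Phi K ?Bc ppi k l (1/2) (\<lambda>i. (?N *\<^sub>v w) $ i) > 0" .
    moreover have "Phi K ?Bc ppi k l (1/2) (\<lambda>i. (?N *\<^sub>v w) $ i) \<le> qv ?Bc ppi dp dm ?N k l (1/2)"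
      using key1[OF t] w by blast
    ultimately show ?thesis unfolding f_def by simp
  qed
  have Spos: "(SUP t\<in>{0<..<1}. f t) > 0"
  proof -
    have "(1::real)/2 \<in> {0<..<1}" by simp
    from cSUP_upper[OF this bdd] fpos show ?thesis by simp
  qed
  have "(SUP t\<in>{0<..<1}. f t) \<le> (c / c') * (SUP t\<in>{0<..<1}. f' t)"
    by (rule cSUP_least) (use fle in auto)
  hence "(c' / c) * (SUP t\<in>{0<..<1}. f t) \<le> (SUP t\<in>{0<..<1}. f' t)"
    using c by (simp add: field_simps)
  moreover have "(SUP t\<in>{0<..<1}. f t) < (c' / c) * (SUP t\<in>{0<..<1}. f t)"
    using Spos c by (simp add: field_simps)
  ultimately show ?thesis unfolding Cf Cf' by simp
qed


lemma chernoff_eq: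
  fixes Bc :: "real mat"
  assumes Bc: "Bc \<in> carrier_mat K K" and sym: "transpose_mat Bc = Bc" and K: "0 < K" and B00: "Bc $$ (0,0) > 0"
  shows "\<exists>dp dm U S. spec_decomp Bc dp dm U S \<and> chernoff_rho Bc ppi = rho_emb Bc ppi dp dm (nu_mat U S)"
proof -
  let ?P = "\<lambda>x. case x of (dp, dm, U, S) \<Rightarrow> spec_decomp Bc dp dm U S"
  obtain dp0 dm0 U0 S0 where "spec_decomp Bc dp0 dm0 U0 S0" using spec_exists[OF Bc sym K B00] by blast
  hence ex: "\<exists>x. ?P x" by (intro exI[of _ "(dp0, dm0, U0, S0)"]) simp
  obtain dp dm U S where eq: "(SOME x. ?P x) = (dp, dm, U, S)" by (metis prod_cases4)
  have "?P (SOME x. ?P x)" by (rule someI_ex[OF ex])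
  hence sd: "spec_decomp Bc dp dm U S" unfolding eq by simp
  have "chernoff_rho Bc ppi = rho_emb Bc ppi dp dm (nu_mat U S)"
    unfolding chernoff_rho_def eq by simp
  thus ?thesis using sd by blast
qed

lemma rho_compare:
  fixes B :: "real mat"
  assumes K2: "K \<ge> 2" and B: "B \<in> carrier_mat K K" and Bent: "\<forall>i<K. \<forall>j<K. 0 < B $$ (i,j) \<and> B $$ (i,j) < 1"
    and symB: "transpose_mat B = B" and rows: "\<forall>i<K. \<forall>j<K. i \<noteq> j \<longrightarrow> row B i \<noteq> row B j"
    and ppos: "\<forall>i<K. 0 < ppi i" and c: "0 < c" "c < c'" "c' \<le> 1"
  shows "chernoff_rho (c \<cdot>\<^sub>m B) ppi < chernoff_rho (c' \<cdot>\<^sub>m B) ppi"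
proof -
  have K0: "0 < K" using K2 by simp
  have symc: "\<And>a. transpose_mat (a \<cdot>\<^sub>m B) = a \<cdot>\<^sub>m B"
  proof -
    fix a :: real
    show "transpose_mat (a \<cdot>\<^sub>m B) = a \<cdot>\<^sub>m B"
    proof (rule eq_matI)
      fix i j assume "i < dim_row (a \<cdot>\<^sub>m B)" "j < dim_col (a \<cdot>\<^sub>m B)"
      hence i: "i < K" and j: "j < K" using B by auto
      have "B $$ (j,i) = B $$ (i,j)" using symB B i j by (metis carrier_matD index_transpose_mat(1))
      thus "transpose_mat (a \<cdot>\<^sub>m B) $$ (i,j) = (a \<cdot>\<^sub>m B) $$ (i,j)" using B i j by simp
    qed (use B in auto)
  qed
  have c1: "c \<le> 1" using c by simp
  have c'0: "0 < c'" using c by simp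
  note P = smB_props[OF B Bent c(1) c1]
  note P' = smB_props[OF B Bent c'0 c(3)]
  obtain dp dm U S where sd: "spec_decomp (c \<cdot>\<^sub>m B) dp dm U S"
    and r: "chernoff_rho (c \<cdot>\<^sub>m B) ppi = rho_emb (c \<cdot>\<^sub>m B) ppi dp dm (nu_mat U S)"
    using chernoff_eq[OF P(1) symc K0] P(2) K0 by blast
  obtain dp' dm' U' S' where sd': "spec_decomp (c' \<cdot>\<^sub>m B) dp' dm' U' S'"
    and r': "chernoff_rho (c' \<cdot>\<^sub>m B) ppi = rho_emb (c' \<cdot>\<^sub>m B) ppi dp' dm' (nu_mat U' S')"
    using chernoff_eq[OF P'(1) symc K0] P'(2) K0 by blast
  define C where "C = (\<lambda>k l. C_kl (c \<cdot>\<^sub>m B) ppi dp dm (nu_mat U S) k l)"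
  define C' where "C' = (\<lambda>k l. C_kl (c' \<cdot>\<^sub>m B) ppi dp' dm' (nu_mat U' S') k l)"
  define A where "A = {C k l | k l. k < K \<and> l < K \<and> k \<noteq> l}"
  define A' where "A' = {C' k l | k l. k < K \<and> l < K \<and> k \<noteq> l}"
  have rA: "rho_emb (c \<cdot>\<^sub>m B) ppi dp dm (nu_mat U S) = Min A"
    unfolding rho_emb_def A_def C_def using B by simp
  have rA': "rho_emb (c' \<cdot>\<^sub>m B) ppi dp' dm' (nu_mat U' S') = Min A'"
    unfolding rho_emb_def A'_def C'_def using B by simp
  have fA: "finite A"
  proof (rule finite_subset)
    show "A \<subseteq> (\<lambda>(k,l). C k l) ` ({..<K} \<times> {..<K})" unfolding A_def by auto
  qed simp
  have fA': "finite A'"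
  proof (rule finite_subset)
    show "A' \<subseteq> (\<lambda>(k,l). C' k l) ` ({..<K} \<times> {..<K})" unfolding A'_def by auto
  qed simp
  have "C' 0 1 \<in> A'" unfolding A'_def using K2 by force
  hence neA': "A' \<noteq> {}" by auto
  have "Min A' \<in> A'" by (rule Min_in[OF fA' neA'])
  then obtain k l where kl: "k < K" "l < K" "k \<noteq> l" and m: "Min A' = C' k l" unfolding A'_def by auto
  have "C k l < C' k l" unfolding C_def C'_def
    by (rule pair_compare[OF B Bent symB rows ppos c sd sd' kl])
  moreover have "Min A \<le> C k l" using fA kl unfolding A_def by (intro Min_le) auto
  ultimately show ?thesis unfolding r r' rA rA' m by simp
qed

theorem corollary1:
  fixes K :: nat and ppi :: "nat \<Rightarrow> real" and B :: "real mat" and p0 p1 :: real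
  assumes "K \<ge> 2"
    and "\<forall>k<K. 0 < ppi k \<and> ppi k < 1"
    and "(\<Sum>k<K. ppi k) = 1"
    and "B \<in> carrier_mat K K"
    and "\<forall>i<K. \<forall>j<K. 0 < B $$ (i,j) \<and> B $$ (i,j) < 1"
    and "transpose_mat B = B"
    and "\<forall>i<K. \<forall>j<K. i \<noteq> j \<longrightarrow> row B i \<noteq> row B j"
    and "0 < p0" and "p0 < 1"
    and "0 < p1" and "p1 < 1 - p0"
  shows "chernoff_superior B ((p0 + p1) \<cdot>\<^sub>m B) ppi \<and>
         chernoff_superior ((p0 + p1) \<cdot>\<^sub>m B) (p0 \<cdot>\<^sub>m B) ppi"
proof -
  have ppos: "\<forall>i<K. 0 < ppi i" using assms(2) by simp
  have B1: "1 \<cdot>\<^sub>m B = B" by (rule eq_matI) auto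
  have "chernoff_rho ((p0 + p1) \<cdot>\<^sub>m B) ppi < chernoff_rho (1 \<cdot>\<^sub>m B) ppi"
    by (rule rho_compare[OF assms(1) assms(4) assms(5) assms(6) assms(7) ppos]) (use assms in auto)
  moreover have "chernoff_rho (p0 \<cdot>\<^sub>m B) ppi < chernoff_rho ((p0 + p1) \<cdot>\<^sub>m B) ppi"
    by (rule rho_compare[OF assms(1) assms(4) assms(5) assms(6) assms(7) ppos]) (use assms in auto)
  ultimately show ?thesis unfolding chernoff_superior_def B1 by simp
qed


end
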